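(* Let $\mathcal H$ be a family of graphs. The following are equivalent: (i) there is a constant $c=c(\mathcal H)$ such that every connected $\mathcal H$-free graph $G$ has fewer than $c$ vertices $v$ with $\alpha(G[N(v)])\ge 2$; (ii) there is a positive integer $n$ such that $\mathcal H\le \{K_n^*,\ P_n,\ K_{1,n}^*,\ K_{2,n},\ E_2+K_n,\ K_1+nP_3,\ CK_n\}$.
   Context: All graphs are finite, simple, undirected. For graphs $H_1,H_2$, write $H_1\prec H_2$ if $H_2$ contains an induced subgraph isomorphic to $H_1$. A graph $G$ is $\mathcal H$-free if no $H\in\mathcal H$ satisfies $H\prec G$. For families $\mathcal H_1,\mathcal H_2$, write $\mathcal H_1\le\mathcal H_2$ if for every $H_2\in\mathcal H_2$ there is $H_1\in\mathcal H_1$ with $H_1\prec H_2$. $N(v)$ is the neighborhood of $v$, $G[S]$ the induced subgraph, $\alpha$ the independence number (the local independence number of $v$ is $\alpha(G[N(v)])$). $K_n$, $E_n$, $P_n$ are the complete graph, edgeless graph, and path on $n$ vertices; $K_{s,t}$ is the complete bipartite graph; $nG$ is the disjoint union of $n$ copies of $G$; $G_1+G_2$ is the join (disjoint union plus all edges between $V(G_1)$ and $V(G_2)$). $K_{1,n}^*$ is obtained from the star $K_{1,n}$ by attaching a new pendant vertex to each leaf; $K_n^*$ is obtained from $K_n$ by attaching a new pendant vertex to each vertex; $CK_n$ is obtained from two disjoint copies of $K_n$ by adding a perfect matching between them. *)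

theory Defs
  imports Main
begin

text \<open>A graph with vertices of type 'a is a pair (V, E) of a vertex set and a set of
  ordered pairs (each undirected edge appears in both orientations).\<close>
type_synonym 'a graph = "'a set \<times> ('a \<times> 'a) set"

definition verts :: "'a graph \<Rightarrow> 'a set" where "verts G = fst G"
definition edges :: "'a graph \<Rightarrow> ('a \<times> 'a) set" where "edges G = snd G"

definition wf_graph :: "'a graph \<Rightarrow> bool" where
  "wf_graph G \<longleftrightarrow> finite (verts G) \<and> edges G \<subseteq> verts G \<times> verts G
     \<and> sym (edges G) \<and> irrefl (edges G)"

definition induced_sub :: "'a graph \<Rightarrow> 'b graph \<Rightarrow> bool" (infix "\<prec>" 50) where
  "H1 \<prec> H2 \<longleftrightarrow> (\<exists>f. inj_on f (verts H1) \<and> f ` verts H1 \<subseteq> verts H2 \<and>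
     (\<forall>u\<in>verts H1. \<forall>v\<in>verts H1. (u, v) \<in> edges H1 \<longleftrightarrow> (f u, f v) \<in> edges H2))"

definition H_free :: "'a graph set \<Rightarrow> 'b graph \<Rightarrow> bool" where
  "H_free \<H> G \<longleftrightarrow> (\<forall>H\<in>\<H>. \<not> H \<prec> G)"

definition connected_graph :: "'a graph \<Rightarrow> bool" where
  "connected_graph G \<longleftrightarrow> verts G \<noteq> {} \<and>
     (\<forall>u\<in>verts G. \<forall>v\<in>verts G. (u, v) \<in> (edges G)\<^sup>*)"

definition nbhd :: "'a graph \<Rightarrow> 'a \<Rightarrow> 'a set" where
  "nbhd G v = {u. (v, u) \<in> edges G}"

definition induced :: "'a graph \<Rightarrow> 'a set \<Rightarrow> 'a graph" where
  "induced G S = (verts G \<inter> S, edges G \<inter> (S \<times> S))"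

definition independent :: "'a graph \<Rightarrow> 'a set \<Rightarrow> bool" where
  "independent G S \<longleftrightarrow> S \<subseteq> verts G \<and> (\<forall>u\<in>S. \<forall>v\<in>S. (u, v) \<notin> edges G)"

definition alpha :: "'a graph \<Rightarrow> nat" where
  "alpha G = Max {card S | S. independent G S}"

definition complete :: "nat \<Rightarrow> nat graph" where
  "complete n = ({0..<n}, {(i, j). i < n \<and> j < n \<and> i \<noteq> j})"

definition edgeless :: "nat \<Rightarrow> nat graph" where
  "edgeless n = ({0..<n}, {})"

definition path :: "nat \<Rightarrow> nat graph" where
  "path n = ({0..<n}, {(i, j). i < n \<and> j < n \<and> (j = Suc i \<or> i = Suc j)})"

definition complete_bip :: "nat \<Rightarrow> nat \<Rightarrow> (nat + nat) graph" where
  "complete_bip s t = (Inl ` {0..<s} \<union> Inr ` {0..<t},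
     {(Inl i, Inr j) | i j. i < s \<and> j < t} \<union> {(Inr j, Inl i) | i j. i < s \<and> j < t})"

definition join :: "'a graph \<Rightarrow> 'b graph \<Rightarrow> ('a + 'b) graph" where
  "join G1 G2 = (Inl ` verts G1 \<union> Inr ` verts G2,
     {(Inl u, Inl v) | u v. (u, v) \<in> edges G1} \<union> {(Inr u, Inr v) | u v. (u, v) \<in> edges G2}
     \<union> {(Inl u, Inr v) | u v. u \<in> verts G1 \<and> v \<in> verts G2}
     \<union> {(Inr v, Inl u) | u v. u \<in> verts G1 \<and> v \<in> verts G2})"

definition copies :: "nat \<Rightarrow> 'a graph \<Rightarrow> (nat \<times> 'a) graph" where
  "copies n G = ({(i, v). i < n \<and> v \<in> verts G},
     {((i, u), (i, v)) | i u v. i < n \<and> (u, v) \<in> edges G})"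

definition add_pendants :: "'a graph \<Rightarrow> 'a set \<Rightarrow> ('a + 'a) graph" where
  "add_pendants G S = (Inl ` verts G \<union> Inr ` S,
     {(Inl u, Inl v) | u v. (u, v) \<in> edges G}
     \<union> {(Inl v, Inr v) | v. v \<in> S} \<union> {(Inr v, Inl v) | v. v \<in> S})"

definition complete_star :: "nat \<Rightarrow> (nat + nat) graph" where
  "complete_star n = add_pendants (complete n) {0..<n}"

definition star_subdiv :: "nat \<Rightarrow> ((nat + nat) + (nat + nat)) graph" where
  "star_subdiv n = add_pendants (complete_bip 1 n) (Inr ` {0..<n})"

definition CK :: "nat \<Rightarrow> (bool \<times> nat) graph" where
  "CK n = ({(b, i). i < n},
     {((b, i), (b, j)) | b i j. i < n \<and> j < n \<and> i \<noteq> j}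
     \<union> {((b, i), (\<not> b, i)) | b i. i < n})"

text \<open>The order \<le> on families, specialised to the 7-graph family of the theorem
  (whose members have different vertex types).\<close>
definition below_family :: "'a graph set \<Rightarrow> nat \<Rightarrow> bool" where
  "below_family \<H> n \<longleftrightarrow>
     (\<exists>H\<in>\<H>. H \<prec> complete_star n) \<and>
     (\<exists>H\<in>\<H>. H \<prec> path n) \<and>
     (\<exists>H\<in>\<H>. H \<prec> star_subdiv n) \<and>
     (\<exists>H\<in>\<H>. H \<prec> complete_bip 2 n) \<and>
     (\<exists>H\<in>\<H>. H \<prec> join (edgeless 2) (complete n)) \<and>
     (\<exists>H\<in>\<H>. H \<prec> join (complete 1) (copies n (path 3))) \<and>
     (\<exists>H\<in>\<H>. H \<prec> CK n)"

end

theory Submission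
  imports Defs "HOL-Library.Ramsey" "HOL-Library.Countable"
begin

lemma verts_pair[simp]: "verts (V, E) = V" by (simp add: verts_def)
lemma edges_pair[simp]: "edges (V, E) = E" by (simp add: edges_def)

lemma induced_sub_trans:
  assumes "induced_sub H F" "induced_sub F G" shows "induced_sub H G"
proof -
  obtain f where f: "inj_on f (verts H)" "f ` verts H \<subseteq> verts F"
    "\<forall>u\<in>verts H. \<forall>v\<in>verts H. (u, v) \<in> edges H \<longleftrightarrow> (f u, f v) \<in> edges F"
    using assms(1) unfolding induced_sub_def by blast
  obtain g where g: "inj_on g (verts F)" "g ` verts F \<subseteq> verts G"
    "\<forall>u\<in>verts F. \<forall>v\<in>verts F. (u, v) \<in> edges F \<longleftrightarrow> (g u, g v) \<in> edges G"
    using assms(2) unfolding induced_sub_def by blast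
  show ?thesis unfolding induced_sub_def
  proof (intro exI[of _ "g \<circ> f"] conjI)
    show "inj_on (g \<circ> f) (verts H)" using f g by (simp add: comp_inj_on inj_on_subset)
    show "(g \<circ> f) ` verts H \<subseteq> verts G" using f g by (auto simp: image_subset_iff)
    show "\<forall>u\<in>verts H. \<forall>v\<in>verts H. (u, v) \<in> edges H \<longleftrightarrow> ((g \<circ> f) u, (g \<circ> f) v) \<in> edges G"
    proof (intro ballI)
      fix u v assume uv: "u \<in> verts H" "v \<in> verts H"
      then have "f u \<in> verts F" "f v \<in> verts F" using f(2) by auto
      then show "(u, v) \<in> edges H \<longleftrightarrow> ((g \<circ> f) u, (g \<circ> f) v) \<in> edges G"
        using f(3) g(3) uv by simp
    qed
  qed
qed

definition Bset :: "(nat \<times> nat) set \<Rightarrow> nat set \<Rightarrow> nat set" where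
  "Bset E W = {v \<in> W. \<exists>a\<in>W. \<exists>c\<in>W. a \<noteq> c \<and> (v, a) \<in> E \<and> (v, c) \<in> E \<and> (a, c) \<notin> E}"

lemma verts_induced[simp]: "verts (induced G S) = verts G \<inter> S" by (simp add: induced_def verts_def)
lemma edges_induced[simp]: "edges (induced G S) = edges G \<inter> (S \<times> S)" by (simp add: induced_def edges_def)

lemma alpha_ge2_iff:
  assumes "wf_graph G"
  shows "alpha (induced G (nbhd G v)) \<ge> 2 \<longleftrightarrow>
    (\<exists>a\<in>verts G. \<exists>c\<in>verts G. a \<noteq> c \<and> (v, a) \<in> edges G \<and> (v, c) \<in> edges G \<and> (a, c) \<notin> edges G)"
proof -
  let ?I = "induced G (nbhd G v)"
  have fin: "finite (verts G)" using assms by (simp add: wf_graph_def)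
  have irr: "\<And>x. (x, x) \<notin> edges G" using assms by (auto simp: wf_graph_def irrefl_def)
  have ind: "independent ?I S \<longleftrightarrow> S \<subseteq> verts G \<inter> nbhd G v \<and> (\<forall>u\<in>S. \<forall>w\<in>S. (u, w) \<notin> edges G)" for S
    unfolding independent_def by fastforce
  have finset: "finite {card S | S. independent ?I S}"
  proof -
    have "{card S | S. independent ?I S} \<subseteq> card ` Pow (verts G)" using ind by blast
    then show ?thesis using fin finite_subset by blast
  qed
  have ne: "{card S | S. independent ?I S} \<noteq> {}" using ind[of "{}"] by blast
  have "alpha ?I \<ge> 2 \<longleftrightarrow> (\<exists>S. independent ?I S \<and> card S \<ge> 2)"
    unfolding alpha_def using Max_ge_iff[OF finset ne] by blast
  also have "\<dots> \<longleftrightarrow> (\<exists>a\<in>verts G. \<exists>c\<in>verts G. a \<noteq> c \<and> (v, a) \<in> edges G \<and> (v, c) \<in> edges G \<and> (a, c) \<notin> edges G)"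
  proof
    assume "\<exists>S. independent ?I S \<and> card S \<ge> 2"
    then obtain S where S: "independent ?I S" "card S \<ge> 2" by blast
    have fS: "finite S" using S(2) card.infinite by fastforce
    obtain a where a: "a \<in> S" using S(2) by (metis card.empty ex_in_conv not_numeral_le_zero)
    have "card (S - {a}) \<ge> 1" using S(2) fS a by (simp add: card_Diff_singleton)
    then obtain c where c: "c \<in> S - {a}" by (metis card.empty ex_in_conv not_one_le_zero)
    from a c obtain a c where "a \<in> S" "c \<in> S" "a \<noteq> c" by blast
    then show "\<exists>a\<in>verts G. \<exists>c\<in>verts G. a \<noteq> c \<and> (v, a) \<in> edges G \<and> (v, c) \<in> edges G \<and> (a, c) \<notin> edges G"
      using S(1) ind unfolding nbhd_def by blast
  next
    assume "\<exists>a\<in>verts G. \<exists>c\<in>verts G. a \<noteq> c \<and> (v, a) \<in> edges G \<and> (v, c) \<in> edges G \<and> (a, c) \<notin> edges G"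
    then obtain a c where ac: "a\<in>verts G" "c\<in>verts G" "a \<noteq> c" "(v, a) \<in> edges G" "(v, c) \<in> edges G" "(a, c) \<notin> edges G"
      by blast
    have "(c, a) \<notin> edges G" using ac assms unfolding wf_graph_def sym_def by blast
    then have "independent ?I {a, c}" using ac irr ind unfolding nbhd_def by blast
    moreover have "card {a, c} \<ge> 2" using ac by simp
    ultimately show "\<exists>S. independent ?I S \<and> card S \<ge> 2" by blast
  qed
  finally show ?thesis .
qed

lemma ramsey_rel:
  "\<exists>N. \<forall>(X::'a set) (P::'a \<Rightarrow> 'a \<Rightarrow> bool). finite X \<and> card X \<ge> N \<longrightarrow>
     (\<exists>R\<subseteq>X. card R = m1 \<and> (\<forall>x\<in>R. \<forall>y\<in>R. x \<noteq> y \<longrightarrow> P x y \<or> P y x)) \<or>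
     (\<exists>R\<subseteq>X. card R = m2 \<and> (\<forall>x\<in>R. \<forall>y\<in>R. x \<noteq> y \<longrightarrow> \<not> P x y))"
proof -
  obtain r where r: "\<forall>(V::'a set) (E::'a set set). finite V \<and> card V \<ge> r \<longrightarrow>
    (\<exists>R \<subseteq> V. card R = m1 \<and> clique R E \<or> card R = m2 \<and> indep R E)"
    using ramsey2 by blast
  show ?thesis
  proof (intro exI[of _ r] allI impI)
    fix X :: "'a set" and P :: "'a \<Rightarrow> 'a \<Rightarrow> bool"
    assume "finite X \<and> card X \<ge> r"
    then obtain R where R: "R \<subseteq> X" "card R = m1 \<and> clique R {{x, y} | x y. P x y} \<or> card R = m2 \<and> indep R {{x, y} | x y. P x y}"
      using r by blast
    show "(\<exists>R\<subseteq>X. card R = m1 \<and> (\<forall>x\<in>R. \<forall>y\<in>R. x \<noteq> y \<longrightarrow> P x y \<or> P y x)) \<or>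
     (\<exists>R\<subseteq>X. card R = m2 \<and> (\<forall>x\<in>R. \<forall>y\<in>R. x \<noteq> y \<longrightarrow> \<not> P x y))"
    proof (cases "card R = m1 \<and> clique R {{x, y} | x y. P x y}")
      case True
      have "\<forall>x\<in>R. \<forall>y\<in>R. x \<noteq> y \<longrightarrow> P x y \<or> P y x"
      proof (intro ballI impI)
        fix x y assume "x \<in> R" "y \<in> R" "x \<noteq> y"
        then have "{x, y} \<in> {{x, y} | x y. P x y}" using True by (auto simp: clique_def)
        then show "P x y \<or> P y x" by (auto simp: doubleton_eq_iff)
      qed
      then show ?thesis using True R by blast
    next
      case False
      then have F: "card R = m2" "indep R {{x, y} | x y. P x y}" using R by auto
      have "\<forall>x\<in>R. \<forall>y\<in>R. x \<noteq> y \<longrightarrow> \<not> P x y"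
        using F by (auto simp: indep_def)
      then show ?thesis using F R by blast
    qed
  qed
qed

lemma extract_lem:
  "\<exists>N. \<forall>(X::nat set) (p::nat\<Rightarrow>nat) (E::(nat\<times>nat) set). finite X \<and> card X \<ge> N \<and>
     (\<forall>x\<in>X. card {y\<in>X. (p x, y) \<in> E} < k) \<longrightarrow>
     (\<exists>X'\<subseteq>X. card X' = M \<and> (\<forall>x\<in>X'. \<forall>y\<in>X'. x \<noteq> y \<longrightarrow> (p x, y) \<notin> E))"
proof -
  obtain N2 where N2: "\<forall>(X::nat set) (P::nat \<Rightarrow> nat \<Rightarrow> bool). finite X \<and> card X \<ge> N2 \<longrightarrow>
     (\<exists>R\<subseteq>X. card R = k+1 \<and> (\<forall>x\<in>R. \<forall>y\<in>R. x \<noteq> y \<longrightarrow> P x y \<or> P y x)) \<or>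
     (\<exists>R\<subseteq>X. card R = M \<and> (\<forall>x\<in>R. \<forall>y\<in>R. x \<noteq> y \<longrightarrow> \<not> P x y))"
    using ramsey_rel[of "k+1" M] by blast
  obtain N1 where N1: "\<forall>(X::nat set) (P::nat \<Rightarrow> nat \<Rightarrow> bool). finite X \<and> card X \<ge> N1 \<longrightarrow>
     (\<exists>R\<subseteq>X. card R = k+1 \<and> (\<forall>x\<in>R. \<forall>y\<in>R. x \<noteq> y \<longrightarrow> P x y \<or> P y x)) \<or>
     (\<exists>R\<subseteq>X. card R = N2 \<and> (\<forall>x\<in>R. \<forall>y\<in>R. x \<noteq> y \<longrightarrow> \<not> P x y))"
    using ramsey_rel[of "k+1" N2] by blast
  show ?thesis
  proof (intro exI[of _ N1] allI impI)
    fix X :: "nat set" and p :: "nat \<Rightarrow> nat" and E :: "(nat\<times>nat) set"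
    assume A: "finite X \<and> card X \<ge> N1 \<and> (\<forall>x\<in>X. card {y\<in>X. (p x, y) \<in> E} < k)"
    have bad: False if R: "R \<subseteq> X" "card R = k+1" "z \<in> R" "\<forall>y\<in>R - {z}. (p z, y) \<in> E" for R z
    proof -
      have "R - {z} \<subseteq> {y\<in>X. (p z, y) \<in> E}" using R by auto
      then have "card (R - {z}) \<le> card {y\<in>X. (p z, y) \<in> E}"
        using A by (intro card_mono) auto
      moreover have "card (R - {z}) = k" using R by (simp add: card_Diff_singleton)
      moreover have "z \<in> X" using R by auto
      ultimately have "k \<le> card {y\<in>X. (p z, y) \<in> E}" by simp
      moreover have "card {y\<in>X. (p z, y) \<in> E} < k" using A \<open>z \<in> X\<close> by blast
      ultimately show False by simp
    qed
    have "(\<exists>R\<subseteq>X. card R = k+1 \<and> (\<forall>x\<in>R. \<forall>y\<in>R. x \<noteq> y \<longrightarrow> (x < y \<and> (p x, y) \<in> E) \<or> (y < x \<and> (p y, x) \<in> E))) \<or>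
     (\<exists>R\<subseteq>X. card R = N2 \<and> (\<forall>x\<in>R. \<forall>y\<in>R. x \<noteq> y \<longrightarrow> \<not> (x < y \<and> (p x, y) \<in> E)))"
      using N1[rule_format, of X "\<lambda>x y. x < y \<and> (p x, y) \<in> E"] A by simp
    moreover have "\<not> (\<exists>R\<subseteq>X. card R = k+1 \<and> (\<forall>x\<in>R. \<forall>y\<in>R. x \<noteq> y \<longrightarrow> (x < y \<and> (p x, y) \<in> E) \<or> (y < x \<and> (p y, x) \<in> E)))"
    proof
      assume "\<exists>R\<subseteq>X. card R = k+1 \<and> (\<forall>x\<in>R. \<forall>y\<in>R. x \<noteq> y \<longrightarrow> (x < y \<and> (p x, y) \<in> E) \<or> (y < x \<and> (p y, x) \<in> E))"
      then obtain R where R: "R \<subseteq> X" "card R = k+1" "\<forall>x\<in>R. \<forall>y\<in>R. x \<noteq> y \<longrightarrow> (x < y \<and> (p x, y) \<in> E) \<or> (y < x \<and> (p y, x) \<in> E)"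
        by blast
      have fR: "finite R" "R \<noteq> {}" using R(2) by (metis card.infinite add_is_0 one_neq_zero, metis card.empty add_is_0 one_neq_zero)
      have "Min R \<in> R" using fR by simp
      moreover have "\<forall>y\<in>R - {Min R}. (p (Min R), y) \<in> E"
      proof
        fix y assume y: "y \<in> R - {Min R}"
        then have "Min R \<le> y" "y \<noteq> Min R" using fR Min_le[of R y] by auto
        then have "Min R < y" by simp
        moreover have "y \<in> R" "y \<noteq> Min R" using y by auto
        ultimately show "(p (Min R), y) \<in> E" using R(3) \<open>Min R \<in> R\<close> by force
      qed
      ultimately show False using bad R by blast
    qed
    ultimately obtain R1 where R1: "R1 \<subseteq> X" "card R1 = N2" "\<forall>x\<in>R1. \<forall>y\<in>R1. x \<noteq> y \<longrightarrow> \<not> (x < y \<and> (p x, y) \<in> E)"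
      by blast
    have fR1: "finite R1" using R1 A finite_subset by blast
    have "(\<exists>R\<subseteq>R1. card R = k+1 \<and> (\<forall>x\<in>R. \<forall>y\<in>R. x \<noteq> y \<longrightarrow> (y < x \<and> (p x, y) \<in> E) \<or> (x < y \<and> (p y, x) \<in> E))) \<or>
     (\<exists>R\<subseteq>R1. card R = M \<and> (\<forall>x\<in>R. \<forall>y\<in>R. x \<noteq> y \<longrightarrow> \<not> (y < x \<and> (p x, y) \<in> E)))"
      using N2[rule_format, of R1 "\<lambda>x y. y < x \<and> (p x, y) \<in> E"] fR1 R1 by simp
    moreover have "\<not> (\<exists>R\<subseteq>R1. card R = k+1 \<and> (\<forall>x\<in>R. \<forall>y\<in>R. x \<noteq> y \<longrightarrow> (y < x \<and> (p x, y) \<in> E) \<or> (x < y \<and> (p y, x) \<in> E)))"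
    proof
      assume "\<exists>R\<subseteq>R1. card R = k+1 \<and> (\<forall>x\<in>R. \<forall>y\<in>R. x \<noteq> y \<longrightarrow> (y < x \<and> (p x, y) \<in> E) \<or> (x < y \<and> (p y, x) \<in> E))"
      then obtain R where R: "R \<subseteq> R1" "card R = k+1" "\<forall>x\<in>R. \<forall>y\<in>R. x \<noteq> y \<longrightarrow> (y < x \<and> (p x, y) \<in> E) \<or> (x < y \<and> (p y, x) \<in> E)"
        by blast
      have fR: "finite R" "R \<noteq> {}" using R(2) by (metis card.infinite add_is_0 one_neq_zero, metis card.empty add_is_0 one_neq_zero)
      have "Max R \<in> R" using fR by simp
      moreover have "\<forall>y\<in>R - {Max R}. (p (Max R), y) \<in> E"
      proof
        fix y assume y: "y \<in> R - {Max R}"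
        then have "y \<le> Max R" "y \<noteq> Max R" using fR Max_ge[of R y] by auto
        then have "y < Max R" by simp
        moreover have "y \<in> R" "y \<noteq> Max R" using y by auto
        ultimately show "(p (Max R), y) \<in> E" using R(3) \<open>Max R \<in> R\<close> by force
      qed
      ultimately show False using bad R R1 by blast
    qed
    ultimately obtain R2 where R2: "R2 \<subseteq> R1" "card R2 = M" "\<forall>x\<in>R2. \<forall>y\<in>R2. x \<noteq> y \<longrightarrow> \<not> (y < x \<and> (p x, y) \<in> E)"
      by blast
    show "\<exists>X'\<subseteq>X. card X' = M \<and> (\<forall>x\<in>X'. \<forall>y\<in>X'. x \<noteq> y \<longrightarrow> (p x, y) \<notin> E)"
    proof (intro exI[of _ R2] conjI ballI impI)
      show "R2 \<subseteq> X" using R1 R2 by blast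
      show "card R2 = M" by fact
      fix x y assume xy: "x \<in> R2" "y \<in> R2" "x \<noteq> y"
      show "(p x, y) \<notin> E"
      proof (cases "x < y")
        case True then show ?thesis using R1(3) R2(1) xy by blast
      next
        case False then have "y < x" using xy by simp
        then show ?thesis using R2(3) xy by blast
      qed
    qed
  qed
qed

lemma induced_subI:
  assumes "inj_on f (verts H)" "f ` verts H \<subseteq> V"
    "\<And>u v. u \<in> verts H \<Longrightarrow> v \<in> verts H \<Longrightarrow> (u, v) \<in> edges H \<longleftrightarrow> (f u, f v) \<in> E"
  shows "induced_sub H (V, E)"
  unfolding induced_sub_def using assms by auto

lemma cs_verts: "verts (complete_star m) = Inl ` {0..<m} \<union> Inr ` {0..<m}"
  by (simp add: complete_star_def add_pendants_def complete_def verts_def)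
lemma cs_edges:
  "(Inl i, Inl j) \<in> edges (complete_star m) \<longleftrightarrow> i < m \<and> j < m \<and> i \<noteq> j"
  "(Inl i, Inr j) \<in> edges (complete_star m) \<longleftrightarrow> i = j \<and> j < m"
  "(Inr i, Inl j) \<in> edges (complete_star m) \<longleftrightarrow> i = j \<and> j < m"
  "(Inr i, Inr j) \<notin> edges (complete_star m)"
  by (auto simp add: complete_star_def add_pendants_def complete_def verts_def edges_def)

lemma pat_Kstar:
  fixes X :: "nat set" and p :: "nat \<Rightarrow> nat"
  assumes fin: "finite X" "card X = m" and sub: "X \<subseteq> V" "p ` X \<subseteq> V"
    and dis: "\<forall>x\<in>X. \<forall>y\<in>X. p x \<noteq> y" and inj: "inj_on p X" and symE: "sym E" and irr: "\<forall>x. (x,x) \<notin> E"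
    and mat: "\<forall>x\<in>X. \<forall>y\<in>X. (p x, y) \<in> E \<longleftrightarrow> x = y"
    and C: "(\<forall>x\<in>X. \<forall>y\<in>X. x\<noteq>y \<longrightarrow> (x,y)\<in>E) \<and> (\<forall>x\<in>X. \<forall>y\<in>X. (p x, p y) \<notin> E) \<or>
            (\<forall>x\<in>X. \<forall>y\<in>X. (x,y)\<notin>E) \<and> (\<forall>x\<in>X. \<forall>y\<in>X. x\<noteq>y \<longrightarrow> (p x, p y) \<in> E)"
  shows "induced_sub (complete_star m) (V, E)"
proof -
  obtain h where h: "bij_betw h {0..<m} X" using ex_bij_betw_nat_finite[OF fin(1)] fin(2) by auto
  have hX: "\<And>i. i < m \<Longrightarrow> h i \<in> X" using h by (auto simp: bij_betw_def)
  have hinj: "\<And>i j. i < m \<Longrightarrow> j < m \<Longrightarrow> h i = h j \<longleftrightarrow> i = j" using h by (auto simp: bij_betw_def inj_on_def)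
  have pinj: "\<And>i j. i < m \<Longrightarrow> j < m \<Longrightarrow> p (h i) = p (h j) \<longleftrightarrow> i = j"
    using inj hX hinj by (metis inj_on_def)
  have mat': "\<And>i j. i < m \<Longrightarrow> j < m \<Longrightarrow> (p (h i), h j) \<in> E \<longleftrightarrow> i = j" using mat hX hinj by auto
  have mat'': "(h j, p (h i)) \<in> E \<longleftrightarrow> i = j" if "i < m" "j < m" for i j
    using mat'[OF that] symE unfolding sym_def by blast
  have dis': "\<And>i j. i < m \<Longrightarrow> j < m \<Longrightarrow> p (h i) \<noteq> h j" using dis hX by auto
  have hV: "\<And>i. i < m \<Longrightarrow> h i \<in> V" "\<And>i. i < m \<Longrightarrow> p (h i) \<in> V" using hX sub by auto
  have dis'': "\<And>i j. i < m \<Longrightarrow> j < m \<Longrightarrow> h j \<noteq> p (h i)" using dis' by metis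
  define c where "c = ((\<forall>x\<in>X. \<forall>y\<in>X. x\<noteq>y \<longrightarrow> (x,y)\<in>E) \<and> (\<forall>x\<in>X. \<forall>y\<in>X. (p x, p y) \<notin> E))"
  define f where "f = (\<lambda>u::nat+nat. case u of Inl i \<Rightarrow> (if c then h i else p (h i)) | Inr i \<Rightarrow> (if c then p (h i) else h i))"
  have C1a: "(h i, h j) \<in> E \<longleftrightarrow> i \<noteq> j" if "c" "i < m" "j < m" for i j
    using that hX[of i] hX[of j] hinj[of i j] irr unfolding c_def by (cases "i = j") auto
  have C1b: "(p (h i), p (h j)) \<notin> E" if "c" "i < m" "j < m" for i j
    using that hX[of i] hX[of j] unfolding c_def by auto
  have C2: "(\<forall>x\<in>X. \<forall>y\<in>X. (x,y)\<notin>E) \<and> (\<forall>x\<in>X. \<forall>y\<in>X. x\<noteq>y \<longrightarrow> (p x, p y) \<in> E)" if "\<not> c"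
    using C that unfolding c_def by blast
  have C2a: "(p (h i), p (h j)) \<in> E \<longleftrightarrow> i \<noteq> j" if "\<not> c" "i < m" "j < m" for i j
    using C2[OF that(1)] hX[of i] hX[of j] hinj[of i j] irr that by (cases "i = j") auto
  have C2b: "(h i, h j) \<notin> E" if "\<not> c" "i < m" "j < m" for i j
    using C2[OF that(1)] hX[of i] hX[of j] that by auto
  show ?thesis
  proof (rule induced_subI[of f])
    show "inj_on f (verts (complete_star m))"
      unfolding inj_on_def cs_verts f_def using hinj pinj dis' dis'' by (auto split: if_splits)
    show "f ` verts (complete_star m) \<subseteq> V"
      unfolding cs_verts f_def using hV by auto
    fix u v assume uv: "u \<in> verts (complete_star m)" "v \<in> verts (complete_star m)"
    show "(u, v) \<in> edges (complete_star m) \<longleftrightarrow> (f u, f v) \<in> E"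
    proof (cases c)
      case True
      then show ?thesis using uv unfolding cs_verts f_def
        by (auto simp: cs_edges C1a C1b mat' mat'')
    next
      case False
      then show ?thesis using uv unfolding cs_verts f_def
        by (auto simp: cs_edges C2a C2b mat' mat'')
    qed
  qed
qed

lemma enum_set:
  assumes "finite X" "card X = m"
  obtains h where "\<And>i. i < m \<Longrightarrow> h i \<in> X" "\<And>i j. i < m \<Longrightarrow> j < m \<Longrightarrow> h i = h j \<longleftrightarrow> i = j"
    "\<And>x. x \<in> X \<Longrightarrow> \<exists>i<m. x = h i"
proof -
  obtain h where h: "bij_betw h {0..<m} X" using ex_bij_betw_nat_finite[OF assms(1)] assms(2) by auto
  show ?thesis
  proof
    show "\<And>i. i < m \<Longrightarrow> h i \<in> X" using h by (auto simp: bij_betw_def)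
    show "\<And>i j. i < m \<Longrightarrow> j < m \<Longrightarrow> h i = h j \<longleftrightarrow> i = j" using h by (auto simp: bij_betw_def inj_on_def)
    show "\<And>x. x \<in> X \<Longrightarrow> \<exists>i<m. x = h i" using h by (auto simp: bij_betw_def)
  qed
qed

lemma symD': "sym E \<Longrightarrow> (x, y) \<in> E \<longleftrightarrow> (y, x) \<in> E" unfolding sym_def by blast

lemma ck_verts: "verts (CK m) = {(b, i). i < m}" by (simp add: CK_def verts_def)
lemma ck_edges: "((b, i), (b', j)) \<in> edges (CK m) \<longleftrightarrow> i < m \<and> j < m \<and> ((b' = b \<and> i \<noteq> j) \<or> (b' = (\<not> b) \<and> i = j))"
  by (auto simp: CK_def edges_def)

lemma pat_CK:
  fixes X :: "nat set" and p :: "nat \<Rightarrow> nat"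
  assumes fin: "finite X" "card X = m" and sub: "X \<subseteq> V" "p ` X \<subseteq> V"
    and dis: "\<forall>x\<in>X. \<forall>y\<in>X. p x \<noteq> y" and inj: "inj_on p X" and symE: "sym E" and irr: "\<forall>x. (x,x) \<notin> E"
    and mat: "\<forall>x\<in>X. \<forall>y\<in>X. (p x, y) \<in> E \<longleftrightarrow> x = y"
    and C: "\<forall>x\<in>X. \<forall>y\<in>X. x\<noteq>y \<longrightarrow> (x,y)\<in>E" "\<forall>x\<in>X. \<forall>y\<in>X. x\<noteq>y \<longrightarrow> (p x, p y) \<in> E"
  shows "induced_sub (CK m) (V, E)"
proof -
  obtain h where hX: "\<And>i. i < m \<Longrightarrow> h i \<in> X" and hinj: "\<And>i j. i < m \<Longrightarrow> j < m \<Longrightarrow> h i = h j \<longleftrightarrow> i = j"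
    using enum_set[OF fin] by metis
  have pinj: "\<And>i j. i < m \<Longrightarrow> j < m \<Longrightarrow> p (h i) = p (h j) \<longleftrightarrow> i = j"
    using inj hX hinj by (metis inj_on_def)
  have mat': "(p (h i), h j) \<in> E \<longleftrightarrow> i = j" "(h j, p (h i)) \<in> E \<longleftrightarrow> i = j" if "i < m" "j < m" for i j
    using mat hX[OF that(1)] hX[OF that(2)] hinj[OF that] symD'[OF symE] by auto
  have hV: "\<And>i. i < m \<Longrightarrow> h i \<in> V" "\<And>i. i < m \<Longrightarrow> p (h i) \<in> V" using hX sub by auto
  have dis': "\<And>i j. i < m \<Longrightarrow> j < m \<Longrightarrow> p (h i) \<noteq> h j" using dis hX by auto
  have dis'': "\<And>i j. i < m \<Longrightarrow> j < m \<Longrightarrow> h j \<noteq> p (h i)" using dis' by metis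
  have C1: "(h i, h j) \<in> E \<longleftrightarrow> i \<noteq> j" if "i < m" "j < m" for i j
    using C(1) hX[of i] hX[of j] hinj[of i j] irr that by (cases "i = j") auto
  have C2: "(p (h i), p (h j)) \<in> E \<longleftrightarrow> i \<noteq> j" if "i < m" "j < m" for i j
    using C(2) hX[of i] hX[of j] hinj[of i j] irr that by (cases "i = j") auto
  define f where "f = (\<lambda>(b::bool, i::nat). if b then h i else p (h i))"
  show ?thesis
  proof (rule induced_subI[of f])
    show "inj_on f (verts (CK m))"
      unfolding inj_on_def ck_verts f_def using hinj pinj dis' dis'' by (auto split: if_splits)
    show "f ` verts (CK m) \<subseteq> V"
      unfolding ck_verts f_def using hV by auto
    fix u v assume uv: "u \<in> verts (CK m)" "v \<in> verts (CK m)"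
    obtain b i b' j where u: "u = (b, i)" "i < m" and v: "v = (b', j)" "j < m" using uv unfolding ck_verts by auto
    show "(u, v) \<in> edges (CK m) \<longleftrightarrow> (f u, f v) \<in> E"
      unfolding u v f_def using u v by (cases b; cases b') (auto simp: ck_edges C1 C2 mat')
  qed
qed

lemma ss_verts: "verts (star_subdiv m) = {Inl (Inl 0)} \<union> Inl ` Inr ` {0..<m} \<union> Inr ` Inr ` {0..<m}"
  by (auto simp: star_subdiv_def add_pendants_def complete_bip_def verts_def)
lemma ss_edges:
  "(Inl (Inl a), Inl (Inr j)) \<in> edges (star_subdiv m) \<longleftrightarrow> a = 0 \<and> j < m"
  "(Inl (Inr j), Inl (Inl a)) \<in> edges (star_subdiv m) \<longleftrightarrow> a = 0 \<and> j < m"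
  "(Inl (Inl a), Inl (Inl b)) \<notin> edges (star_subdiv m)"
  "(Inl (Inr i), Inl (Inr j)) \<notin> edges (star_subdiv m)"
  "(Inl (Inr i), Inr (Inr j)) \<in> edges (star_subdiv m) \<longleftrightarrow> i = j \<and> j < m"
  "(Inr (Inr j), Inl (Inr i)) \<in> edges (star_subdiv m) \<longleftrightarrow> i = j \<and> j < m"
  "(Inl (Inl a), Inr x) \<notin> edges (star_subdiv m)"
  "(Inr x, Inl (Inl a)) \<notin> edges (star_subdiv m)"
  "(Inr x, Inr y) \<notin> edges (star_subdiv m)"
  by (auto simp: star_subdiv_def add_pendants_def complete_bip_def edges_def verts_def)

lemma pat_SS:
  fixes X :: "nat set" and p :: "nat \<Rightarrow> nat"
  assumes fin: "finite X" "card X = m" and sub: "X \<subseteq> V" "p ` X \<subseteq> V" "c \<in> V"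
    and dis: "\<forall>x\<in>X. \<forall>y\<in>X. p x \<noteq> y" "c \<notin> X" "c \<notin> p ` X"
    and inj: "inj_on p X" and symE: "sym E" and irr: "\<forall>x. (x,x) \<notin> E"
    and mat: "\<forall>x\<in>X. \<forall>y\<in>X. (p x, y) \<in> E \<longleftrightarrow> x = y"
    and C: "\<forall>x\<in>X. \<forall>y\<in>X. (x,y)\<notin>E" "\<forall>x\<in>X. \<forall>y\<in>X. (p x, p y) \<notin> E"
    and cen: "\<forall>x\<in>X. (c, x) \<in> E \<and> (c, p x) \<notin> E"
  shows "induced_sub (star_subdiv m) (V, E)"
proof -
  obtain h where hX: "\<And>i. i < m \<Longrightarrow> h i \<in> X" and hinj: "\<And>i j. i < m \<Longrightarrow> j < m \<Longrightarrow> h i = h j \<longleftrightarrow> i = j"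
    using enum_set[OF fin] by metis
  have pinj: "\<And>i j. i < m \<Longrightarrow> j < m \<Longrightarrow> p (h i) = p (h j) \<longleftrightarrow> i = j"
    using inj hX hinj by (metis inj_on_def)
  have mat': "(p (h i), h j) \<in> E \<longleftrightarrow> i = j" "(h j, p (h i)) \<in> E \<longleftrightarrow> i = j" if "i < m" "j < m" for i j
    using mat hX[OF that(1)] hX[OF that(2)] hinj[OF that] symD'[OF symE] by auto
  have hV: "\<And>i. i < m \<Longrightarrow> h i \<in> V" "\<And>i. i < m \<Longrightarrow> p (h i) \<in> V" using hX sub by auto
  have dis': "\<And>i j. i < m \<Longrightarrow> j < m \<Longrightarrow> p (h i) \<noteq> h j" using dis hX by auto
  have dis'': "\<And>i j. i < m \<Longrightarrow> j < m \<Longrightarrow> h j \<noteq> p (h i)" using dis' by metis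
  have disc: "\<And>i. i < m \<Longrightarrow> h i \<noteq> c" "\<And>i. i < m \<Longrightarrow> p (h i) \<noteq> c" using dis hX by auto
  have disc': "\<And>i. i < m \<Longrightarrow> c \<noteq> h i" "\<And>i. i < m \<Longrightarrow> c \<noteq> p (h i)" using disc by metis+
  have C1: "(h i, h j) \<notin> E" "(p (h i), p (h j)) \<notin> E" if "i < m" "j < m" for i j
    using C hX[of i] hX[of j] that by auto
  have cen': "(c, h i) \<in> E" "(h i, c) \<in> E" "(c, p (h i)) \<notin> E" "(p (h i), c) \<notin> E" if "i < m" for i
    using cen hX[OF that] symD'[OF symE] by auto
  define f :: "(nat+nat)+(nat+nat) \<Rightarrow> nat" where "f = (\<lambda>u. case u of Inl (Inl _) \<Rightarrow> c | Inl (Inr j) \<Rightarrow> h j | Inr (Inr j) \<Rightarrow> p (h j) | Inr (Inl _) \<Rightarrow> c)"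
  have fv: "f (Inl (Inl a)) = c" "f (Inl (Inr j)) = h j" "f (Inr (Inr j)) = p (h j)" for a j
    by (simp_all add: f_def)
  show ?thesis
  proof (rule induced_subI[of f])
    show "inj_on f (verts (star_subdiv m))"
      unfolding inj_on_def ss_verts by (auto simp: fv hinj pinj dis' dis'' disc disc')
    show "f ` verts (star_subdiv m) \<subseteq> V"
      unfolding ss_verts using hV \<open>c \<in> V\<close> by (auto simp: fv)
    fix u v assume uv: "u \<in> verts (star_subdiv m)" "v \<in> verts (star_subdiv m)"
    then show "(u, v) \<in> edges (star_subdiv m) \<longleftrightarrow> (f u, f v) \<in> E"
      unfolding ss_verts using irr by (auto simp: fv ss_edges C1 mat' cen')
  qed
qed

lemma kb_verts: "verts (complete_bip 2 m) = Inl ` {0..<2} \<union> Inr ` {0..<m}"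
  by (simp add: complete_bip_def verts_def)
lemma kb_edges:
  "(Inl i, Inr j) \<in> edges (complete_bip 2 m) \<longleftrightarrow> i < 2 \<and> j < m"
  "(Inr j, Inl i) \<in> edges (complete_bip 2 m) \<longleftrightarrow> i < 2 \<and> j < m"
  "(Inl i, Inl i') \<notin> edges (complete_bip 2 m)"
  "(Inr j, Inr j') \<notin> edges (complete_bip 2 m)"
  by (auto simp: complete_bip_def edges_def)

lemma ek_verts: "verts (join (edgeless 2) (complete m)) = Inl ` {0..<2} \<union> Inr ` {0..<m}"
  by (simp add: join_def edgeless_def complete_def verts_def)
lemma ek_edges:
  "(Inl i, Inr j) \<in> edges (join (edgeless 2) (complete m)) \<longleftrightarrow> i < 2 \<and> j < m"
  "(Inr j, Inl i) \<in> edges (join (edgeless 2) (complete m)) \<longleftrightarrow> i < 2 \<and> j < m"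
  "(Inl i, Inl i') \<notin> edges (join (edgeless 2) (complete m))"
  "(Inr j, Inr j') \<in> edges (join (edgeless 2) (complete m)) \<longleftrightarrow> j < m \<and> j' < m \<and> j \<noteq> j'"
  by (auto simp: join_def edgeless_def complete_def edges_def verts_def)

lemma pat_two:
  fixes X :: "nat set"
  assumes fin: "finite X" "card X = m" and sub: "X \<subseteq> V" "c \<in> V" "q \<in> V"
    and dis: "c \<notin> X" "q \<notin> X" "c \<noteq> q" and symE: "sym E" and irr: "\<forall>x. (x,x) \<notin> E"
    and cq: "(c, q) \<notin> E" and adj: "\<forall>x\<in>X. (c, x) \<in> E \<and> (q, x) \<in> E"
  shows "(\<forall>x\<in>X. \<forall>y\<in>X. (x,y)\<notin>E) \<Longrightarrow> induced_sub (complete_bip 2 m) (V, E)"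
    and "(\<forall>x\<in>X. \<forall>y\<in>X. x \<noteq> y \<longrightarrow> (x,y)\<in>E) \<Longrightarrow> induced_sub (join (edgeless 2) (complete m)) (V, E)"
proof -
  obtain h where hX: "\<And>i. i < m \<Longrightarrow> h i \<in> X" and hinj: "\<And>i j. i < m \<Longrightarrow> j < m \<Longrightarrow> h i = h j \<longleftrightarrow> i = j"
    using enum_set[OF fin] by metis
  have hV: "\<And>i. i < m \<Longrightarrow> h i \<in> V" using hX sub by auto
  have disc: "\<And>i. i < m \<Longrightarrow> h i \<noteq> c" "\<And>i. i < m \<Longrightarrow> h i \<noteq> q"
     "\<And>i. i < m \<Longrightarrow> c \<noteq> h i" "\<And>i. i < m \<Longrightarrow> q \<noteq> h i" using dis hX by auto
  have adj': "(c, h i) \<in> E" "(h i, c) \<in> E" "(q, h i) \<in> E" "(h i, q) \<in> E" if "i < m" for i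
    using adj hX[OF that] symD'[OF symE] by auto
  have qc: "(q, c) \<notin> E" using cq symD'[OF symE] by auto
  define f where "f = (\<lambda>u. case u of Inl i \<Rightarrow> (if i = (0::nat) then c else q) | Inr j \<Rightarrow> h j)"
  have fv: "f (Inl i) = (if i = 0 then c else q)" "f (Inr j) = h j" for i j
    by (simp_all add: f_def)
  have i2: "\<And>i::nat. i < 2 \<longleftrightarrow> i = 0 \<or> i = 1" by auto
  show "induced_sub (complete_bip 2 m) (V, E)" if I: "\<forall>x\<in>X. \<forall>y\<in>X. (x,y)\<notin>E"
  proof (rule induced_subI[of f])
    have I': "(h i, h j) \<notin> E" if "i < m" "j < m" for i j using I hX that by auto
    show "inj_on f (verts (complete_bip 2 m))"
      unfolding inj_on_def kb_verts using dis by (auto simp: fv i2 hinj disc)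
    show "f ` verts (complete_bip 2 m) \<subseteq> V"
      unfolding kb_verts using hV sub by (auto simp: fv)
    fix u v assume uv: "u \<in> verts (complete_bip 2 m)" "v \<in> verts (complete_bip 2 m)"
    then show "(u, v) \<in> edges (complete_bip 2 m) \<longleftrightarrow> (f u, f v) \<in> E"
      unfolding kb_verts using irr cq qc by (auto simp: fv kb_edges I' adj' i2)
  qed
  show "induced_sub (join (edgeless 2) (complete m)) (V, E)" if I: "\<forall>x\<in>X. \<forall>y\<in>X. x \<noteq> y \<longrightarrow> (x,y)\<in>E"
  proof (rule induced_subI[of f])
    have I': "(h i, h j) \<in> E \<longleftrightarrow> i \<noteq> j" if "i < m" "j < m" for i j
      using I hX[of i] hX[of j] hinj[of i j] irr that by (cases "i = j") auto
    show "inj_on f (verts (join (edgeless 2) (complete m)))"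
      unfolding inj_on_def ek_verts using dis by (auto simp: fv i2 hinj disc)
    show "f ` verts (join (edgeless 2) (complete m)) \<subseteq> V"
      unfolding ek_verts using hV sub by (auto simp: fv)
    fix u v assume uv: "u \<in> verts (join (edgeless 2) (complete m))" "v \<in> verts (join (edgeless 2) (complete m))"
    then show "(u, v) \<in> edges (join (edgeless 2) (complete m)) \<longleftrightarrow> (f u, f v) \<in> E"
      unfolding ek_verts using irr cq qc by (auto simp: fv ek_edges I' adj' i2)
  qed
qed

lemma path_verts: "verts (path m) = {0..<m}" by (simp add: path_def verts_def)
lemma path_edges: "(i, j) \<in> edges (path m) \<longleftrightarrow> i < m \<and> j < m \<and> (j = Suc i \<or> i = Suc j)"
  by (simp add: path_def edges_def)

lemma pat_path:
  assumes "\<forall>i<m. f i \<in> V" "\<forall>i<m. \<forall>j<m. f i = f j \<longrightarrow> i = j"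
    "\<forall>i<m. \<forall>j<m. (f i, f j) \<in> E \<longleftrightarrow> (j = Suc i \<or> i = Suc j)"
  shows "induced_sub (path m) (V, E)"
proof (rule induced_subI[of f])
  show "inj_on f (verts (path m))" using assms(2) unfolding path_verts inj_on_def by auto
  show "f ` verts (path m) \<subseteq> V" using assms(1) unfolding path_verts by auto
  fix u v assume "u \<in> verts (path m)" "v \<in> verts (path m)"
  then show "(u, v) \<in> edges (path m) \<longleftrightarrow> (f u, f v) \<in> E"
    using assms(3) unfolding path_verts path_edges by auto
qed

lemma path_mono: "a \<le> b \<Longrightarrow> induced_sub (path a) (path b)"
  unfolding induced_sub_def path_verts
  by (intro exI[of _ id]) (auto simp: path_edges path_verts)

lemma kp_verts: "verts (join (complete 1) (copies m (path 3))) = {Inl 0} \<union> Inr ` {(i, j). i < m \<and> j < 3}"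
  by (auto simp: join_def complete_def copies_def path_def verts_def)
lemma kp_edges:
  "(Inl a, Inl b) \<notin> edges (join (complete 1) (copies m (path 3)))"
  "(Inl a, Inr (i, j)) \<in> edges (join (complete 1) (copies m (path 3))) \<longleftrightarrow> a = 0 \<and> i < m \<and> j < 3"
  "(Inr (i, j), Inl a) \<in> edges (join (complete 1) (copies m (path 3))) \<longleftrightarrow> a = 0 \<and> i < m \<and> j < 3"
  "(Inr (i, j), Inr (i', j')) \<in> edges (join (complete 1) (copies m (path 3))) \<longleftrightarrow>
     i = i' \<and> i < m \<and> j < 3 \<and> j' < 3 \<and> (j' = Suc j \<or> j = Suc j')"
  by (auto simp: join_def complete_def copies_def path_def verts_def edges_def)

lemma pat_KP:
  fixes T :: "nat \<Rightarrow> nat \<Rightarrow> nat"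
  assumes V: "d \<in> V" "\<forall>i<m. \<forall>j<3. T i j \<in> V"
    and D: "\<forall>i<m. \<forall>j<3. (d, T i j) \<in> E \<and> T i j \<noteq> d"
    and P: "\<forall>i<m. \<forall>j<3. \<forall>j'<3. (T i j, T i j') \<in> E \<longleftrightarrow> (j' = Suc j \<or> j = Suc j')"
    and I: "\<forall>i<m. \<forall>j<3. \<forall>j'<3. T i j = T i j' \<longrightarrow> j = j'"
    and O: "\<forall>i<m. \<forall>i'<m. i \<noteq> i' \<longrightarrow> (\<forall>j<3. \<forall>j'<3. T i j \<noteq> T i' j' \<and> (T i j, T i' j') \<notin> E)"
    and symE: "sym E" and irr: "\<forall>x. (x,x) \<notin> E"
  shows "induced_sub (join (complete 1) (copies m (path 3))) (V, E)"
proof -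
  define f :: "nat + nat \<times> nat \<Rightarrow> nat" where "f = (\<lambda>u. case u of Inl _ \<Rightarrow> d | Inr (i, j) \<Rightarrow> T i j)"
  have fv: "f (Inl a) = d" "f (Inr (i, j)) = T i j" for a i j by (simp_all add: f_def)
  have D': "(d, T i j) \<in> E" "(T i j, d) \<in> E" "T i j \<noteq> d" "d \<noteq> T i j" if "i < m" "j < 3" for i j
    using D that symD'[OF symE] by auto
  have P': "(T i j, T i' j') \<in> E \<longleftrightarrow> i = i' \<and> (j' = Suc j \<or> j = Suc j')" if "i < m" "j < 3" "i' < m" "j' < 3" for i j i' j'
    using P O that by (cases "i = i'") auto
  have I': "T i j = T i' j' \<longleftrightarrow> i = i' \<and> j = j'" if "i < m" "j < 3" "i' < m" "j' < 3" for i j i' j'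
    using I O that by (cases "i = i'") auto
  show ?thesis
  proof (rule induced_subI[of f])
    show "inj_on f (verts (join (complete 1) (copies m (path 3))))"
      unfolding inj_on_def kp_verts by (auto simp: fv D' I')
    show "f ` verts (join (complete 1) (copies m (path 3))) \<subseteq> V"
      unfolding kp_verts using V by (auto simp: fv)
    fix u v assume "u \<in> verts (join (complete 1) (copies m (path 3)))" "v \<in> verts (join (complete 1) (copies m (path 3)))"
    then show "(u, v) \<in> edges (join (complete 1) (copies m (path 3))) \<longleftrightarrow> (f u, f v) \<in> E"
      unfolding kp_verts using irr kp_edges[unfolded One_nat_def] by (auto simp: fv D' P')
  qed
qed

definition amb :: "nat set \<Rightarrow> (nat \<times> nat) set \<Rightarrow> nat \<Rightarrow> bool" where
  "amb V E n \<longleftrightarrow> finite V \<and> E \<subseteq> V \<times> V \<and> sym E \<and> (\<forall>x. (x, x) \<notin> E) \<and> 0 < n \<and>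
    \<not> induced_sub (complete_star n) (V, E) \<and> \<not> induced_sub (path n) (V, E) \<and>
    \<not> induced_sub (star_subdiv n) (V, E) \<and> \<not> induced_sub (complete_bip 2 n) (V, E) \<and>
    \<not> induced_sub (join (edgeless 2) (complete n)) (V, E) \<and>
    \<not> induced_sub (join (complete 1) (copies n (path 3))) (V, E) \<and> \<not> induced_sub (CK n) (V, E)"

definition conn :: "(nat \<times> nat) set \<Rightarrow> nat set \<Rightarrow> bool" where
  "conn E W \<longleftrightarrow> (\<forall>u\<in>W. \<forall>v\<in>W. (u, v) \<in> (E \<inter> W \<times> W)\<^sup>*)"

fun Rl :: "(nat \<times> nat) set \<Rightarrow> nat set \<Rightarrow> nat \<Rightarrow> nat \<Rightarrow> nat set" where
  "Rl E W r 0 = {r}"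
| "Rl E W r (Suc i) = Rl E W r i \<union> {v\<in>W. \<exists>u\<in>Rl E W r i. (u, v) \<in> E}"

fun Ly :: "(nat \<times> nat) set \<Rightarrow> nat set \<Rightarrow> nat \<Rightarrow> nat \<Rightarrow> nat set" where
  "Ly E W r 0 = {r}"
| "Ly E W r (Suc i) = Rl E W r (Suc i) - Rl E W r i"

lemma Rl_mono: "i \<le> j \<Longrightarrow> Rl E W r i \<subseteq> Rl E W r j"
proof (induction j)
  case 0 then show ?case by simp
next
  case (Suc j) then show ?case by (cases "i = Suc j") auto
qed

lemma Rl_sub: "r \<in> W \<Longrightarrow> Rl E W r i \<subseteq> W"
  by (induction i) auto

lemma Ly_sub: "Ly E W r i \<subseteq> Rl E W r i"
  by (cases i) auto

lemma Ly_W: "r \<in> W \<Longrightarrow> Ly E W r i \<subseteq> W"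
  using Ly_sub Rl_sub by blast

lemma Rl_Ly: "v \<in> Rl E W r i \<Longrightarrow> \<exists>j\<le>i. v \<in> Ly E W r j"
proof (induction i)
  case 0 then show ?case by simp
next
  case (Suc i)
  show ?case
  proof (cases "v \<in> Rl E W r i")
    case True then show ?thesis using Suc.IH le_SucI by blast
  next
    case False then have "v \<in> Ly E W r (Suc i)" using Suc.prems by simp
    then show ?thesis by blast
  qed
qed

lemma Ly_disj: "v \<in> Ly E W r i \<Longrightarrow> v \<in> Ly E W r j \<Longrightarrow> i = j"
proof (rule ccontr)
  have key: "v \<in> Ly E W r i \<Longrightarrow> v \<in> Ly E W r j \<Longrightarrow> i < j \<Longrightarrow> False" for i j
  proof -
    assume a: "v \<in> Ly E W r i" "v \<in> Ly E W r j" "i < j"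
    then obtain j' where j': "j = Suc j'" "i \<le> j'" by (cases j) auto
    have "v \<in> Rl E W r j'" using a(1) Ly_sub Rl_mono[OF j'(2)] by blast
    then show False using a(2) j' by simp
  qed
  assume "v \<in> Ly E W r i" "v \<in> Ly E W r j" "i \<noteq> j"
  then show False using key by (metis linorder_neqE_nat)
qed

lemma Ly_edge1:
  assumes "u \<in> Ly E W r i" "v \<in> Ly E W r j" "(u, v) \<in> E" "v \<in> W"
  shows "j \<le> Suc i"
proof (rule ccontr)
  assume "\<not> j \<le> Suc i"
  then obtain j' where j': "j = Suc j'" "Suc i \<le> j'" by (cases j) auto
  have "u \<in> Rl E W r i" using assms(1) Ly_sub by blast
  then have "v \<in> Rl E W r (Suc i)" using assms by auto
  then have "v \<in> Rl E W r j'" using Rl_mono[OF j'(2)] by blast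
  then show False using assms(2) j' by simp
qed

lemma Ly_edge:
  assumes "r \<in> W" "sym E" "u \<in> Ly E W r i" "v \<in> Ly E W r j" "(u, v) \<in> E"
  shows "j \<le> Suc i" "i \<le> Suc j"
proof -
  have W: "u \<in> W" "v \<in> W" using assms Ly_W by blast+
  show "j \<le> Suc i" using Ly_edge1 assms W by blast
  have "(v, u) \<in> E" using assms(2,5) symD'[OF assms(2)] by blast
  then show "i \<le> Suc j" using Ly_edge1 assms W by blast
qed

lemma Ly_parent:
  assumes "v \<in> Ly E W r (Suc i)"
  shows "\<exists>u\<in>Ly E W r i. (u, v) \<in> E"
proof -
  from assms obtain u where u: "u \<in> Rl E W r i" "(u, v) \<in> E" "v \<notin> Rl E W r i" by auto
  obtain j where j: "j \<le> i" "u \<in> Ly E W r j" using Rl_Ly[OF u(1)] by blast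
  have "j = i"
  proof (rule ccontr)
    assume "j \<noteq> i"
    then have "Suc j \<le> i" using j by simp
    have "u \<in> Rl E W r j" using j Ly_sub by blast
    then have "v \<in> Rl E W r (Suc j)" using assms u by auto
    then show False using Rl_mono[OF \<open>Suc j \<le> i\<close>] u by blast
  qed
  then show ?thesis using j u by blast
qed

lemma reach_Rl:
  assumes "(r, v) \<in> (E \<inter> W \<times> W)\<^sup>*"
  shows "\<exists>i. v \<in> Rl E W r i"
  using assms
proof (induction rule: rtrancl_induct)
  case base then show ?case by (intro exI[of _ 0]) simp
next
  case (step y z)
  then obtain i where "y \<in> Rl E W r i" by blast
  then have "z \<in> Rl E W r (Suc i)" using step by auto
  then show ?case by blast
qed

lemma layer_chain:
  "v \<in> Ly E W r k \<Longrightarrow> \<exists>f. f k = v \<and> (\<forall>i\<le>k. f i \<in> Ly E W r i) \<and> (\<forall>i<k. (f i, f (Suc i)) \<in> E)"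
proof (induction k arbitrary: v)
  case 0 then show ?case by (intro exI[of _ "\<lambda>_. v"]) simp
next
  case (Suc k)
  obtain u where u: "u \<in> Ly E W r k" "(u, v) \<in> E" using Ly_parent[OF Suc.prems] by blast
  obtain g where g: "g k = u" "\<forall>i\<le>k. g i \<in> Ly E W r i" "\<forall>i<k. (g i, g (Suc i)) \<in> E"
    using Suc.IH[OF u(1)] by blast
  show ?case
  proof (intro exI[of _ "g(Suc k := v)"] conjI allI impI)
    show "(g(Suc k := v)) (Suc k) = v" by simp
    fix i
    show "i \<le> Suc k \<Longrightarrow> (g(Suc k := v)) i \<in> Ly E W r i"
      using g Suc.prems by (cases "i = Suc k") auto
    show "i < Suc k \<Longrightarrow> ((g(Suc k := v)) i, (g(Suc k := v)) (Suc i)) \<in> E"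
      using g u by (cases "i = k") auto
  qed
qed

lemma layer_path:
  assumes "W \<subseteq> V" "r \<in> W" "sym E" "\<forall>x. (x, x) \<notin> E" "v \<in> Ly E W r k"
  shows "induced_sub (path (Suc k)) (V, E)"
proof -
  obtain f where f: "f k = v" "\<forall>i\<le>k. f i \<in> Ly E W r i" "\<forall>i<k. (f i, f (Suc i)) \<in> E"
    using layer_chain[OF assms(5)] by blast
  show ?thesis
  proof (rule pat_path)
    show "\<forall>i<Suc k. f i \<in> V"
    proof (intro allI impI)
      fix i assume "i < Suc k"
      then have "f i \<in> Ly E W r i" using f(2) by simp
      then show "f i \<in> V" using Ly_W[OF assms(2)] assms(1) by blast
    qed
    show "\<forall>i<Suc k. \<forall>j<Suc k. f i = f j \<longrightarrow> i = j" using f(2) Ly_disj by (metis less_Suc_eq_le)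
    show "\<forall>i<Suc k. \<forall>j<Suc k. (f i, f j) \<in> E \<longleftrightarrow> (j = Suc i \<or> i = Suc j)"
    proof (intro allI impI)
      fix i j assume ij: "i < Suc k" "j < Suc k"
      show "(f i, f j) \<in> E \<longleftrightarrow> (j = Suc i \<or> i = Suc j)"
      proof
        assume e: "(f i, f j) \<in> E"
        have "f i \<in> Ly E W r i" "f j \<in> Ly E W r j" using f(2) ij by auto
        then have "j \<le> Suc i" "i \<le> Suc j" using Ly_edge[OF assms(2,3) _ _ e] by blast+
        moreover have "i \<noteq> j" using e assms(4) by auto
        ultimately show "j = Suc i \<or> i = Suc j" by linarith
      next
        assume "j = Suc i \<or> i = Suc j"
        then show "(f i, f j) \<in> E"
        proof
          assume "j = Suc i" then show ?thesis using f(3) ij by auto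
        next
          assume "i = Suc j" then have "(f j, f i) \<in> E" using f(3) ij by auto
          then show ?thesis using symD'[OF assms(3)] by blast
        qed
      qed
    qed
  qed
qed

lemma layer_bound:
  assumes "amb V E n" "W \<subseteq> V" "r \<in> W" "v \<in> Ly E W r k"
  shows "Suc k < n"
proof (rule ccontr)
  assume "\<not> Suc k < n"
  then have "induced_sub (path n) (path (Suc k))" by (intro path_mono) simp
  moreover have "induced_sub (path (Suc k)) (V, E)"
    using layer_path[OF assms(2,3) _ _ assms(4)] assms(1) by (simp add: amb_def)
  ultimately show False using assms(1) induced_sub_trans unfolding amb_def by blast
qed

lemma conn_layers:
  assumes "amb V E n" "W \<subseteq> V" "r \<in> W" "conn E W" "v \<in> W"
  shows "\<exists>j. Suc j < n \<and> v \<in> Ly E W r j"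
proof -
  have "(r, v) \<in> (E \<inter> W \<times> W)\<^sup>*" using assms(3,4,5) unfolding conn_def by blast
  then obtain i where "v \<in> Rl E W r i" using reach_Rl by blast
  then obtain j where "v \<in> Ly E W r j" using Rl_Ly by blast
  then show ?thesis using layer_bound[OF assms(1,2,3)] by blast
qed

lemma amb_facts:
  assumes "amb V E n"
  shows "finite V" "E \<subseteq> V \<times> V" "sym E" "\<forall>x. (x, x) \<notin> E" "0 < n"
    "\<not> induced_sub (complete_star n) (V, E)" "\<not> induced_sub (path n) (V, E)"
    "\<not> induced_sub (star_subdiv n) (V, E)" "\<not> induced_sub (complete_bip 2 n) (V, E)"
    "\<not> induced_sub (join (edgeless 2) (complete n)) (V, E)"
    "\<not> induced_sub (join (complete 1) (copies n (path 3))) (V, E)" "\<not> induced_sub (CK n) (V, E)"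
  using assms unfolding amb_def by auto

lemma inj_from_matching:
  assumes "\<forall>x\<in>Y. \<forall>y\<in>Y. (x, g y) \<in> E \<longleftrightarrow> x = y"
  shows "inj_on g Y"
  unfolding inj_on_def using assms by metis

declare Ly.simps(2)[simp del] Rl.simps(2)[simp del]

lemma Ly_neq: "x \<in> Ly E W r i \<Longrightarrow> y \<in> Ly E W r j \<Longrightarrow> i \<noteq> j \<Longrightarrow> x \<noteq> y"
  using Ly_disj by blast

definition Upprop :: "nat \<Rightarrow> nat \<Rightarrow> nat \<Rightarrow> bool" where
  "Upprop n i N \<longleftrightarrow> (\<forall>V E W r Y g. amb V E n \<and> W \<subseteq> V \<and> r \<in> W \<and> Y \<subseteq> Ly E W r i \<and>
      g ` Y \<subseteq> Ly E W r (Suc i) \<and> (\<forall>x\<in>Y. \<forall>y\<in>Y. (x, y) \<notin> E) \<and> (\<forall>x\<in>Y. \<forall>y\<in>Y. (g x, g y) \<notin> E) \<and>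
      (\<forall>x\<in>Y. \<forall>y\<in>Y. (x, g y) \<in> E \<longleftrightarrow> x = y) \<and> N \<le> card Y \<longrightarrow> False)"

lemma up_lem: "\<exists>N. Upprop n i N"
proof (induction i)
  case 0
  show ?case unfolding Upprop_def
  proof (intro exI[of _ 2] allI impI)
    fix V E W r Y g
    assume A: "amb V E n \<and> W \<subseteq> V \<and> r \<in> W \<and> Y \<subseteq> Ly E W r 0 \<and>
      g ` Y \<subseteq> Ly E W r (Suc 0) \<and> (\<forall>x\<in>Y. \<forall>y\<in>Y. (x, y) \<notin> E) \<and> (\<forall>x\<in>Y. \<forall>y\<in>Y. (g x, g y) \<notin> E) \<and>
      (\<forall>x\<in>Y. \<forall>y\<in>Y. (x, g y) \<in> E \<longleftrightarrow> x = y) \<and> 2 \<le> card Y"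
    then have "Y \<subseteq> {r}" by simp
    then have "card Y \<le> card {r}" by (intro card_mono) auto
    then have "card Y \<le> 1" by simp
    then show False using A by simp
  qed
next
  case (Suc i)
  obtain N0 where N0: "Upprop n i N0" using Suc.IH by blast
  obtain M where M: "\<forall>(X::nat set) (P::nat \<Rightarrow> nat \<Rightarrow> bool). finite X \<and> card X \<ge> M \<longrightarrow>
     (\<exists>R\<subseteq>X. card R = n \<and> (\<forall>x\<in>R. \<forall>y\<in>R. x \<noteq> y \<longrightarrow> P x y \<or> P y x)) \<or>
     (\<exists>R\<subseteq>X. card R = N0 \<and> (\<forall>x\<in>R. \<forall>y\<in>R. x \<noteq> y \<longrightarrow> \<not> P x y))"
    using ramsey_rel[of n N0] by blast
  obtain N1 where N1: "\<forall>(X::nat set) (p::nat\<Rightarrow>nat) (E::(nat\<times>nat) set). finite X \<and> card X \<ge> N1 \<and>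
     (\<forall>x\<in>X. card {y\<in>X. (p x, y) \<in> E} < n) \<longrightarrow>
     (\<exists>X'\<subseteq>X. card X' = M \<and> (\<forall>x\<in>X'. \<forall>y\<in>X'. x \<noteq> y \<longrightarrow> (p x, y) \<notin> E))"
    using extract_lem[of n M] by blast
  show ?case unfolding Upprop_def
  proof (intro exI[of _ "max N1 n"] allI impI)
    fix V E W r Y g
    assume A: "amb V E n \<and> W \<subseteq> V \<and> r \<in> W \<and> Y \<subseteq> Ly E W r (Suc i) \<and>
      g ` Y \<subseteq> Ly E W r (Suc (Suc i)) \<and> (\<forall>x\<in>Y. \<forall>y\<in>Y. (x, y) \<notin> E) \<and> (\<forall>x\<in>Y. \<forall>y\<in>Y. (g x, g y) \<notin> E) \<and>
      (\<forall>x\<in>Y. \<forall>y\<in>Y. (x, g y) \<in> E \<longleftrightarrow> x = y) \<and> max N1 n \<le> card Y"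
    have amb: "amb V E n" using A by (elim conjE) assumption
    have WV: "W \<subseteq> V" using A by (elim conjE) assumption
    have rW: "r \<in> W" using A by (elim conjE) assumption
    have YL: "Y \<subseteq> Ly E W r (Suc i)" using A by (elim conjE) assumption
    have gL: "g ` Y \<subseteq> Ly E W r (Suc (Suc i))" using A by (elim conjE) assumption
    have Yi: "\<forall>x\<in>Y. \<forall>y\<in>Y. (x, y) \<notin> E" using A by (elim conjE) assumption
    have gi: "\<forall>x\<in>Y. \<forall>y\<in>Y. (g x, g y) \<notin> E" using A by (elim conjE) assumption
    have gm: "\<forall>x\<in>Y. \<forall>y\<in>Y. (x, g y) \<in> E \<longleftrightarrow> x = y" using A by (elim conjE) assumption
    have cY: "max N1 n \<le> card Y" using A by (elim conjE) assumption
    note af = amb_facts[OF amb]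
    have LV: "\<And>j. Ly E W r j \<subseteq> V" by (rule subset_trans[OF Ly_W[OF rW] WV])
    have "Y \<subseteq> V" using YL LV by blast
    then have finY: "finite Y" using af(1) by (rule finite_subset)
    have gm': "\<forall>x\<in>Y. \<forall>y\<in>Y. (g x, y) \<in> E \<longleftrightarrow> x = y"
    proof (intro ballI)
      fix x y assume xy: "x \<in> Y" "y \<in> Y"
      have "(y, g x) \<in> E \<longleftrightarrow> y = x" using gm[rule_format, OF xy(2) xy(1)] .
      then show "(g x, y) \<in> E \<longleftrightarrow> x = y" using symD'[OF af(3)] by auto
    qed
    have ginj: "inj_on g Y" using inj_from_matching[OF gm] .
    show False
    proof (cases "\<exists>q\<in>Ly E W r i. n \<le> card {y\<in>Y. (q, y) \<in> E}")
      case True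
      then obtain q where q: "q \<in> Ly E W r i" "n \<le> card {y\<in>Y. (q, y) \<in> E}" by blast
      obtain X where X: "X \<subseteq> {y\<in>Y. (q, y) \<in> E}" "card X = n"
        using obtain_subset_with_card_n[OF q(2)] by blast
      have XY: "X \<subseteq> Y" using X by blast
      have finX: "finite X" using XY finY by (rule finite_subset)
      have "induced_sub (star_subdiv n) (V, E)"
      proof (rule pat_SS[OF finX X(2)])
        show "X \<subseteq> V" using XY YL LV by blast
        show "g ` X \<subseteq> V" using XY gL LV by blast
        show "q \<in> V" using q LV by blast
        show "\<forall>x\<in>X. \<forall>y\<in>X. g x \<noteq> y"
        proof (intro ballI)
          fix x y assume "x \<in> X" "y \<in> X"
          then have "g x \<in> Ly E W r (Suc (Suc i))" "y \<in> Ly E W r (Suc i)" using XY YL gL by auto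
          then show "g x \<noteq> y" using Ly_neq n_not_Suc_n by metis
        qed
        show "q \<notin> X"
        proof
          assume "q \<in> X" then have "q \<in> Ly E W r (Suc i)" using XY YL by blast
          then show False using q(1) Ly_neq n_not_Suc_n by metis
        qed
        show "q \<notin> g ` X"
        proof
          assume "q \<in> g ` X" then have "q \<in> Ly E W r (Suc (Suc i))" using XY gL by blast
          moreover have "i \<noteq> Suc (Suc i)" by simp
          ultimately show False using q(1) Ly_neq by metis
        qed
        show "inj_on g X" using ginj XY inj_on_subset by blast
        show "sym E" "\<forall>x. (x, x) \<notin> E" using af by auto
        show "\<forall>x\<in>X. \<forall>y\<in>X. (g x, y) \<in> E \<longleftrightarrow> x = y" using gm' XY by blast
        show "\<forall>x\<in>X. \<forall>y\<in>X. (x, y) \<notin> E" using Yi XY by blast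
        show "\<forall>x\<in>X. \<forall>y\<in>X. (g x, g y) \<notin> E" using gi XY by blast
        show "\<forall>x\<in>X. (q, x) \<in> E \<and> (q, g x) \<notin> E"
        proof
          fix x assume x: "x \<in> X"
          have "(q, x) \<in> E" using x X by blast
          moreover have "(q, g x) \<notin> E"
          proof
            assume "(q, g x) \<in> E"
            moreover have "g x \<in> Ly E W r (Suc (Suc i))" using x XY gL by blast
            ultimately have "Suc (Suc i) \<le> Suc i" using Ly_edge[OF rW af(3) q(1)] by blast
            then show False by simp
          qed
          ultimately show "(q, x) \<in> E \<and> (q, g x) \<notin> E" by blast
        qed
      qed
      with af(8) show False by (rule notE)
    next
      case False
      then have light: "\<forall>q\<in>Ly E W r i. card {y\<in>Y. (q, y) \<in> E} < n" by (simp add: not_le)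
      define par where "par y = (SOME u. u \<in> Ly E W r i \<and> (u, y) \<in> E)" for y
      have par: "par y \<in> Ly E W r i \<and> (par y, y) \<in> E" if "y \<in> Y" for y
      proof -
        have "y \<in> Ly E W r (Suc i)" using that YL by blast
        then have "\<exists>u\<in>Ly E W r i. (u, y) \<in> E" by (rule Ly_parent)
        then have "\<exists>u. u \<in> Ly E W r i \<and> (u, y) \<in> E" by blast
        then show ?thesis unfolding par_def by (rule someI_ex)
      qed
      have "\<forall>y\<in>Y. card {y'\<in>Y. (par y, y') \<in> E} < n"
      proof
        fix y assume "y \<in> Y"
        then have "par y \<in> Ly E W r i" using par by blast
        then show "card {y'\<in>Y. (par y, y') \<in> E} < n" using light by blast
      qed
      then have "finite Y \<and> card Y \<ge> N1 \<and> (\<forall>y\<in>Y. card {y'\<in>Y. (par y, y') \<in> E} < n)" using finY cY by simp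
      from N1[rule_format, OF this]
      obtain Y1 where Y1: "Y1 \<subseteq> Y" "card Y1 = M" "\<forall>x\<in>Y1. \<forall>y\<in>Y1. x \<noteq> y \<longrightarrow> (par x, y) \<notin> E"
        by blast
      have finY1: "finite Y1" using Y1(1) finY by (rule finite_subset)
      have pm: "\<forall>x\<in>Y1. \<forall>y\<in>Y1. (par x, y) \<in> E \<longleftrightarrow> x = y"
      proof (intro ballI)
        fix x y assume xy: "x \<in> Y1" "y \<in> Y1"
        show "(par x, y) \<in> E \<longleftrightarrow> x = y"
        proof (cases "x = y")
          case True then show ?thesis using par xy Y1(1) by blast
        next
          case False then show ?thesis using Y1(3) xy by blast
        qed
      qed
      have pinj: "inj_on par Y1"
        unfolding inj_on_def using pm by metis
      have cZ0: "card (par ` Y1) = M" using pinj Y1 card_image by metis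
      have finZ0: "finite (par ` Y1)" using finY1 by simp
      have parL: "par ` Y1 \<subseteq> Ly E W r i" using par Y1 by blast
      have "(\<exists>R\<subseteq>par ` Y1. card R = n \<and> (\<forall>x\<in>R. \<forall>y\<in>R. x \<noteq> y \<longrightarrow> (x, y) \<in> E \<or> (y, x) \<in> E)) \<or>
            (\<exists>R\<subseteq>par ` Y1. card R = N0 \<and> (\<forall>x\<in>R. \<forall>y\<in>R. x \<noteq> y \<longrightarrow> (x, y) \<notin> E))"
        using M[rule_format, of "par ` Y1" "\<lambda>a b. (a, b) \<in> E"] finZ0 cZ0 by simp
      then show False
      proof
        assume "\<exists>R\<subseteq>par ` Y1. card R = n \<and> (\<forall>x\<in>R. \<forall>y\<in>R. x \<noteq> y \<longrightarrow> (x, y) \<in> E \<or> (y, x) \<in> E)"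
        then obtain Z where Z: "Z \<subseteq> par ` Y1" "card Z = n" "\<forall>x\<in>Z. \<forall>y\<in>Z. x \<noteq> y \<longrightarrow> (x, y) \<in> E \<or> (y, x) \<in> E"
          by blast
        have Z3: "\<forall>x\<in>Z. \<forall>y\<in>Z. x \<noteq> y \<longrightarrow> (x, y) \<in> E" using Z(3) symD'[OF af(3)] by blast
        define X where "X = {y\<in>Y1. par y \<in> Z}"
        have XY1: "X \<subseteq> Y1" unfolding X_def by blast
        have pX: "par ` X = Z" unfolding X_def using Z(1) by blast
        have finX: "finite X" using XY1 finY1 by (rule finite_subset)
        have cX: "card X = n" using card_image[OF inj_on_subset[OF pinj XY1]] pX Z(2) by simp
        have "induced_sub (complete_star n) (V, E)"
        proof (rule pat_Kstar[OF finX cX])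
          show "X \<subseteq> V" using XY1 Y1 YL LV by blast
          show "par ` X \<subseteq> V" using pX Z(1) parL LV by blast
          show "\<forall>x\<in>X. \<forall>y\<in>X. par x \<noteq> y"
          proof (intro ballI)
            fix x y assume "x \<in> X" "y \<in> X"
            then have "par x \<in> Ly E W r i" "y \<in> Ly E W r (Suc i)" using XY1 Y1 YL par by blast+
            then show "par x \<noteq> y" using Ly_neq n_not_Suc_n by metis
          qed
          show "inj_on par X" using inj_on_subset[OF pinj XY1] .
          show "sym E" "\<forall>x. (x, x) \<notin> E" using af by auto
          show "\<forall>x\<in>X. \<forall>y\<in>X. (par x, y) \<in> E \<longleftrightarrow> x = y" using pm XY1 by blast
          have "\<forall>x\<in>X. \<forall>y\<in>X. x \<noteq> y \<longrightarrow> (par x, par y) \<in> E"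
          proof (intro ballI impI)
            fix x y assume "x \<in> X" "y \<in> X" "x \<noteq> y"
            then have "par x \<noteq> par y" "par x \<in> Z" "par y \<in> Z" using inj_on_subset[OF pinj XY1] unfolding inj_on_def X_def by auto
            then show "(par x, par y) \<in> E" using Z3 by blast
          qed
          moreover have "\<forall>x\<in>X. \<forall>y\<in>X. (x, y) \<notin> E" using Yi XY1 Y1 by blast
          ultimately show "(\<forall>x\<in>X. \<forall>y\<in>X. x\<noteq>y \<longrightarrow> (x,y)\<in>E) \<and> (\<forall>x\<in>X. \<forall>y\<in>X. (par x, par y) \<notin> E) \<or>
            (\<forall>x\<in>X. \<forall>y\<in>X. (x,y)\<notin>E) \<and> (\<forall>x\<in>X. \<forall>y\<in>X. x\<noteq>y \<longrightarrow> (par x, par y) \<in> E)" by blast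
        qed
        with af(6) show False by (rule notE)
      next
        assume "\<exists>R\<subseteq>par ` Y1. card R = N0 \<and> (\<forall>x\<in>R. \<forall>y\<in>R. x \<noteq> y \<longrightarrow> (x, y) \<notin> E)"
        then obtain Z where Z: "Z \<subseteq> par ` Y1" "card Z = N0" "\<forall>x\<in>Z. \<forall>y\<in>Z. x \<noteq> y \<longrightarrow> (x, y) \<notin> E"
          by blast
        define g' where "g' = inv_into Y1 par"
        have g'Y1: "\<And>z. z \<in> Z \<Longrightarrow> g' z \<in> Y1" unfolding g'_def using Z(1) by (meson inv_into_into subsetD)
        have pg': "\<And>z. z \<in> Z \<Longrightarrow> par (g' z) = z" unfolding g'_def using Z(1) by (meson f_inv_into_f subsetD)
        have "Z \<subseteq> Ly E W r i" using Z(1) parL by blast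
        moreover have "g' ` Z \<subseteq> Ly E W r (Suc i)" using g'Y1 Y1 YL by blast
        moreover have "\<forall>x\<in>Z. \<forall>y\<in>Z. (x, y) \<notin> E" using Z(3) af(4) by metis
        moreover have "\<forall>x\<in>Z. \<forall>y\<in>Z. (g' x, g' y) \<notin> E" using g'Y1 Y1 Yi by blast
        moreover have "\<forall>x\<in>Z. \<forall>y\<in>Z. (x, g' y) \<in> E \<longleftrightarrow> x = y"
        proof (intro ballI)
          fix x y assume xy: "x \<in> Z" "y \<in> Z"
          have "(x, g' y) \<in> E \<longleftrightarrow> (par (g' x), g' y) \<in> E" using pg' xy by simp
          also have "\<dots> \<longleftrightarrow> g' x = g' y" using pm g'Y1 xy by blast
          also have "\<dots> \<longleftrightarrow> x = y" using pg' xy by metis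
          finally show "(x, g' y) \<in> E \<longleftrightarrow> x = y" .
        qed
        ultimately have conj: "amb V E n \<and> W \<subseteq> V \<and> r \<in> W \<and> Z \<subseteq> Ly E W r i \<and>
          g' ` Z \<subseteq> Ly E W r (Suc i) \<and> (\<forall>x\<in>Z. \<forall>y\<in>Z. (x, y) \<notin> E) \<and> (\<forall>x\<in>Z. \<forall>y\<in>Z. (g' x, g' y) \<notin> E) \<and>
          (\<forall>x\<in>Z. \<forall>y\<in>Z. (x, g' y) \<in> E \<longleftrightarrow> x = y) \<and> N0 \<le> card Z" using amb WV rW Z(2) by simp
        show False using N0[unfolded Upprop_def, rule_format, OF conj] .
      qed
    qed
  qed
qed

lemma mcase:
  fixes X :: "nat set" and p :: "nat \<Rightarrow> nat"
  assumes amb: "amb V E n" and fin: "finite X" "n \<le> card X" and sub: "X \<subseteq> V" "p ` X \<subseteq> V"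
    and dis: "\<forall>x\<in>X. \<forall>y\<in>X. p x \<noteq> y" and inj: "inj_on p X"
    and mat: "\<forall>x\<in>X. \<forall>y\<in>X. (p x, y) \<in> E \<longleftrightarrow> x = y"
    and c1: "(\<forall>x\<in>X. \<forall>y\<in>X. x \<noteq> y \<longrightarrow> (x, y) \<in> E) \<or> (\<forall>x\<in>X. \<forall>y\<in>X. (x, y) \<notin> E)"
    and c2: "(\<forall>x\<in>X. \<forall>y\<in>X. x \<noteq> y \<longrightarrow> (p x, p y) \<in> E) \<or> (\<forall>x\<in>X. \<forall>y\<in>X. (p x, p y) \<notin> E)"
    and c3: "(\<forall>x\<in>X. \<forall>y\<in>X. x \<noteq> y \<longrightarrow> (x, y) \<in> E) \<or> (\<forall>x\<in>X. \<forall>y\<in>X. x \<noteq> y \<longrightarrow> (p x, p y) \<in> E)"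
  shows False
proof -
  note af = amb_facts[OF amb]
  obtain X' where X': "X' \<subseteq> X" "card X' = n" using obtain_subset_with_card_n[OF fin(2)] by blast
  have finX': "finite X'" using X'(1) fin(1) by (rule finite_subset)
  have sub': "X' \<subseteq> V" "p ` X' \<subseteq> V" using X'(1) sub by blast+
  have dis': "\<forall>x\<in>X'. \<forall>y\<in>X'. p x \<noteq> y" using X'(1) dis by blast
  have inj': "inj_on p X'" using inj_on_subset[OF inj X'(1)] .
  have mat': "\<forall>x\<in>X'. \<forall>y\<in>X'. (p x, y) \<in> E \<longleftrightarrow> x = y"
  proof (intro ballI)
    fix x y assume "x \<in> X'" "y \<in> X'"
    then have "x \<in> X" "y \<in> X" using X'(1) by blast+
    then show "(p x, y) \<in> E \<longleftrightarrow> x = y" using mat[rule_format] by blast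
  qed
  consider (cc) "\<forall>x\<in>X. \<forall>y\<in>X. x \<noteq> y \<longrightarrow> (x, y) \<in> E" "\<forall>x\<in>X. \<forall>y\<in>X. x \<noteq> y \<longrightarrow> (p x, p y) \<in> E"
    | (ci) "\<forall>x\<in>X. \<forall>y\<in>X. x \<noteq> y \<longrightarrow> (x, y) \<in> E" "\<forall>x\<in>X. \<forall>y\<in>X. (p x, p y) \<notin> E"
    | (ic) "\<forall>x\<in>X. \<forall>y\<in>X. (x, y) \<notin> E" "\<forall>x\<in>X. \<forall>y\<in>X. x \<noteq> y \<longrightarrow> (p x, p y) \<in> E"
    using c1 c2 c3 by blast
  then show False
  proof cases
    case cc
    have "induced_sub (CK n) (V, E)"
    proof (rule pat_CK[OF finX' X'(2) sub' dis' inj' af(3) af(4) mat'])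
      show "\<forall>x\<in>X'. \<forall>y\<in>X'. x \<noteq> y \<longrightarrow> (x, y) \<in> E" using cc(1) X'(1) by blast
      show "\<forall>x\<in>X'. \<forall>y\<in>X'. x \<noteq> y \<longrightarrow> (p x, p y) \<in> E" using cc(2) X'(1) by blast
    qed
    with af(12) show False by (rule notE)
  next
    case ci
    have "induced_sub (complete_star n) (V, E)"
    proof (rule pat_Kstar[OF finX' X'(2) sub' dis' inj' af(3) af(4) mat'])
      have "\<forall>x\<in>X'. \<forall>y\<in>X'. x \<noteq> y \<longrightarrow> (x, y) \<in> E" using ci(1) X'(1) by blast
      moreover have "\<forall>x\<in>X'. \<forall>y\<in>X'. (p x, p y) \<notin> E" using ci(2) X'(1) by blast
      ultimately show "(\<forall>x\<in>X'. \<forall>y\<in>X'. x\<noteq>y \<longrightarrow> (x,y)\<in>E) \<and> (\<forall>x\<in>X'. \<forall>y\<in>X'. (p x, p y) \<notin> E) \<or>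
            (\<forall>x\<in>X'. \<forall>y\<in>X'. (x,y)\<notin>E) \<and> (\<forall>x\<in>X'. \<forall>y\<in>X'. x\<noteq>y \<longrightarrow> (p x, p y) \<in> E)" by blast
    qed
    with af(6) show False by (rule notE)
  next
    case ic
    have "induced_sub (complete_star n) (V, E)"
    proof (rule pat_Kstar[OF finX' X'(2) sub' dis' inj' af(3) af(4) mat'])
      have "\<forall>x\<in>X'. \<forall>y\<in>X'. (x, y) \<notin> E" using ic(1) X'(1) by blast
      moreover have "\<forall>x\<in>X'. \<forall>y\<in>X'. x \<noteq> y \<longrightarrow> (p x, p y) \<in> E" using ic(2) X'(1) by blast
      ultimately show "(\<forall>x\<in>X'. \<forall>y\<in>X'. x\<noteq>y \<longrightarrow> (x,y)\<in>E) \<and> (\<forall>x\<in>X'. \<forall>y\<in>X'. (p x, p y) \<notin> E) \<or>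
            (\<forall>x\<in>X'. \<forall>y\<in>X'. (x,y)\<notin>E) \<and> (\<forall>x\<in>X'. \<forall>y\<in>X'. x\<noteq>y \<longrightarrow> (p x, p y) \<in> E)" by blast
    qed
    with af(6) show False by (rule notE)
  qed
qed

definition Topprop :: "nat \<Rightarrow> nat \<Rightarrow> nat \<Rightarrow> nat \<Rightarrow> bool" where
  "Topprop n k j N \<longleftrightarrow> (\<forall>V E W r T. amb V E n \<and> W \<subseteq> V \<and> r \<in> W \<and> T \<subseteq> Ly E W r j \<and>
      N \<le> card T \<and> (\<forall>w\<in>W. card {t\<in>T. (w, t) \<in> E} < k) \<longrightarrow> False)"

lemma top_lem: "\<exists>N. Topprop n k j N"
proof (cases j)
  case 0
  show ?thesis unfolding Topprop_def
  proof (intro exI[of _ 2] allI impI)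
    fix V E W r T
    assume A: "amb V E n \<and> W \<subseteq> V \<and> r \<in> W \<and> T \<subseteq> Ly E W r j \<and>
      2 \<le> card T \<and> (\<forall>w\<in>W. card {t\<in>T. (w, t) \<in> E} < k)"
    then have "T \<subseteq> {r}" using 0 by simp
    then have "card T \<le> card {r}" by (intro card_mono) auto
    then have "card T \<le> 1" by simp
    then show False using A by simp
  qed
next
  case (Suc i)
  obtain N0 where N0: "Upprop n i N0" using up_lem by blast
  obtain R1 where R1: "\<forall>(X::nat set) (P::nat \<Rightarrow> nat \<Rightarrow> bool). finite X \<and> card X \<ge> R1 \<longrightarrow>
     (\<exists>R\<subseteq>X. card R = n \<and> (\<forall>x\<in>R. \<forall>y\<in>R. x \<noteq> y \<longrightarrow> P x y \<or> P y x)) \<or>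
     (\<exists>R\<subseteq>X. card R = max n N0 \<and> (\<forall>x\<in>R. \<forall>y\<in>R. x \<noteq> y \<longrightarrow> \<not> P x y))"
    using ramsey_rel[of n "max n N0"] by blast
  obtain R2 where R2: "\<forall>(X::nat set) (P::nat \<Rightarrow> nat \<Rightarrow> bool). finite X \<and> card X \<ge> R2 \<longrightarrow>
     (\<exists>R\<subseteq>X. card R = R1 \<and> (\<forall>x\<in>R. \<forall>y\<in>R. x \<noteq> y \<longrightarrow> P x y \<or> P y x)) \<or>
     (\<exists>R\<subseteq>X. card R = R1 \<and> (\<forall>x\<in>R. \<forall>y\<in>R. x \<noteq> y \<longrightarrow> \<not> P x y))"
    using ramsey_rel[of R1 R1] by blast
  obtain N1 where N1: "\<forall>(X::nat set) (p::nat\<Rightarrow>nat) (E::(nat\<times>nat) set). finite X \<and> card X \<ge> N1 \<and>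
     (\<forall>x\<in>X. card {y\<in>X. (p x, y) \<in> E} < k) \<longrightarrow>
     (\<exists>X'\<subseteq>X. card X' = R2 \<and> (\<forall>x\<in>X'. \<forall>y\<in>X'. x \<noteq> y \<longrightarrow> (p x, y) \<notin> E))"
    using extract_lem[of k R2] by blast
  show ?thesis unfolding Topprop_def
  proof (intro exI[of _ N1] allI impI)
    fix V E W r T
    assume A: "amb V E n \<and> W \<subseteq> V \<and> r \<in> W \<and> T \<subseteq> Ly E W r j \<and>
      N1 \<le> card T \<and> (\<forall>w\<in>W. card {t\<in>T. (w, t) \<in> E} < k)"
    have amb: "amb V E n" using A by (elim conjE) assumption
    have WV: "W \<subseteq> V" using A by (elim conjE) assumption
    have rW: "r \<in> W" using A by (elim conjE) assumption
    have TL: "T \<subseteq> Ly E W r (Suc i)" using A Suc by (elim conjE) simp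
    have cT: "N1 \<le> card T" using A by (elim conjE) assumption
    have light: "\<forall>w\<in>W. card {t\<in>T. (w, t) \<in> E} < k" using A by (elim conjE) assumption
    note af = amb_facts[OF amb]
    have LV: "\<And>j. Ly E W r j \<subseteq> V" by (rule subset_trans[OF Ly_W[OF rW] WV])
    have LW: "\<And>j. Ly E W r j \<subseteq> W" by (rule Ly_W[OF rW])
    have "T \<subseteq> V" using TL LV by blast
    then have finT: "finite T" using af(1) by (rule finite_subset)
    define par where "par y = (SOME u. u \<in> Ly E W r i \<and> (u, y) \<in> E)" for y
    have par: "par y \<in> Ly E W r i \<and> (par y, y) \<in> E" if "y \<in> T" for y
    proof -
      have "y \<in> Ly E W r (Suc i)" using that TL by blast
      then have "\<exists>u\<in>Ly E W r i. (u, y) \<in> E" by (rule Ly_parent)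
      then have "\<exists>u. u \<in> Ly E W r i \<and> (u, y) \<in> E" by blast
      then show ?thesis unfolding par_def by (rule someI_ex)
    qed
    have "\<forall>y\<in>T. card {y'\<in>T. (par y, y') \<in> E} < k"
    proof
      fix y assume "y \<in> T"
      then have "par y \<in> W" using par LW by blast
      then show "card {y'\<in>T. (par y, y') \<in> E} < k" using light by blast
    qed
    then have "finite T \<and> card T \<ge> N1 \<and> (\<forall>y\<in>T. card {y'\<in>T. (par y, y') \<in> E} < k)" using finT cT by simp
    from N1[rule_format, OF this]
    obtain T1 where T1: "T1 \<subseteq> T" "card T1 = R2" "\<forall>x\<in>T1. \<forall>y\<in>T1. x \<noteq> y \<longrightarrow> (par x, y) \<notin> E"
      by blast
    have finT1: "finite T1" using T1(1) finT by (rule finite_subset)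
    have "(\<exists>R\<subseteq>T1. card R = R1 \<and> (\<forall>x\<in>R. \<forall>y\<in>R. x \<noteq> y \<longrightarrow> (x, y) \<in> E \<or> (y, x) \<in> E)) \<or>
          (\<exists>R\<subseteq>T1. card R = R1 \<and> (\<forall>x\<in>R. \<forall>y\<in>R. x \<noteq> y \<longrightarrow> (x, y) \<notin> E))"
      using R2[rule_format, of T1 "\<lambda>a b. (a, b) \<in> E"] finT1 T1(2) by simp
    then obtain T2 where T2: "T2 \<subseteq> T1" "card T2 = R1"
      "(\<forall>x\<in>T2. \<forall>y\<in>T2. x \<noteq> y \<longrightarrow> (x, y) \<in> E) \<or> (\<forall>x\<in>T2. \<forall>y\<in>T2. (x, y) \<notin> E)"
    proof (elim disjE exE conjE)
      fix R assume R: "R \<subseteq> T1" "card R = R1" "\<forall>x\<in>R. \<forall>y\<in>R. x \<noteq> y \<longrightarrow> (x, y) \<in> E \<or> (y, x) \<in> E"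
        and th: "\<And>T2. T2 \<subseteq> T1 \<Longrightarrow> card T2 = R1 \<Longrightarrow> (\<forall>x\<in>T2. \<forall>y\<in>T2. x \<noteq> y \<longrightarrow> (x, y) \<in> E) \<or> (\<forall>x\<in>T2. \<forall>y\<in>T2. (x, y) \<notin> E) \<Longrightarrow> thesis"
      have "\<forall>x\<in>R. \<forall>y\<in>R. x \<noteq> y \<longrightarrow> (x, y) \<in> E" using R(3) symD'[OF af(3)] by blast
      then show thesis using th[OF R(1,2)] by blast
    next
      fix R assume R: "R \<subseteq> T1" "card R = R1" "\<forall>x\<in>R. \<forall>y\<in>R. x \<noteq> y \<longrightarrow> (x, y) \<notin> E"
        and th: "\<And>T2. T2 \<subseteq> T1 \<Longrightarrow> card T2 = R1 \<Longrightarrow> (\<forall>x\<in>T2. \<forall>y\<in>T2. x \<noteq> y \<longrightarrow> (x, y) \<in> E) \<or> (\<forall>x\<in>T2. \<forall>y\<in>T2. (x, y) \<notin> E) \<Longrightarrow> thesis"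
      have "\<forall>x\<in>R. \<forall>y\<in>R. (x, y) \<notin> E" using R(3) af(4) by metis
      then show thesis using th[OF R(1,2)] by blast
    qed
    have finT2: "finite T2" using T2(1) finT1 by (rule finite_subset)
    have T2T: "T2 \<subseteq> T" using T2(1) T1(1) by blast
    have pm: "\<forall>x\<in>T2. \<forall>y\<in>T2. (par x, y) \<in> E \<longleftrightarrow> x = y"
    proof (intro ballI)
      fix x y assume xy: "x \<in> T2" "y \<in> T2"
      show "(par x, y) \<in> E \<longleftrightarrow> x = y"
      proof (cases "x = y")
        case True then show ?thesis using par xy T2T by blast
      next
        case False then show ?thesis using T1(3) xy T2(1) by blast
      qed
    qed
    have pinj: "inj_on par T2"
      unfolding inj_on_def
    proof (intro ballI impI)
      fix x y assume xy: "x \<in> T2" "y \<in> T2" "par x = par y"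
      then have "(par x, y) \<in> E" using pm by auto
      then show "x = y" using pm xy by blast
    qed
    have parL: "par ` T2 \<subseteq> Ly E W r i" using par T2T by blast
    have finZ0: "finite (par ` T2)" using finT2 by simp
    have cZ0: "card (par ` T2) = R1" using card_image[OF pinj] T2(2) by simp
    have pdis: "\<forall>x\<in>T2. \<forall>y\<in>T2. par x \<noteq> y"
    proof (intro ballI)
      fix x y assume "x \<in> T2" "y \<in> T2"
      then have "par x \<in> Ly E W r i" "y \<in> Ly E W r (Suc i)" using T2T TL par by blast+
      then show "par x \<noteq> y" using Ly_neq n_not_Suc_n by metis
    qed
    have "(\<exists>R\<subseteq>par ` T2. card R = n \<and> (\<forall>x\<in>R. \<forall>y\<in>R. x \<noteq> y \<longrightarrow> (x, y) \<in> E \<or> (y, x) \<in> E)) \<or>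
          (\<exists>R\<subseteq>par ` T2. card R = max n N0 \<and> (\<forall>x\<in>R. \<forall>y\<in>R. x \<noteq> y \<longrightarrow> (x, y) \<notin> E))"
      using R1[rule_format, of "par ` T2" "\<lambda>a b. (a, b) \<in> E"] finZ0 cZ0 by simp
    then obtain Z where Z: "Z \<subseteq> par ` T2"
      "card Z = n \<and> (\<forall>x\<in>Z. \<forall>y\<in>Z. x \<noteq> y \<longrightarrow> (x, y) \<in> E) \<or> card Z = max n N0 \<and> (\<forall>x\<in>Z. \<forall>y\<in>Z. (x, y) \<notin> E)"
    proof (elim disjE exE conjE)
      fix R assume R: "R \<subseteq> par ` T2" "card R = n" "\<forall>x\<in>R. \<forall>y\<in>R. x \<noteq> y \<longrightarrow> (x, y) \<in> E \<or> (y, x) \<in> E"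
        and th: "\<And>Z. Z \<subseteq> par ` T2 \<Longrightarrow> card Z = n \<and> (\<forall>x\<in>Z. \<forall>y\<in>Z. x \<noteq> y \<longrightarrow> (x, y) \<in> E) \<or> card Z = max n N0 \<and> (\<forall>x\<in>Z. \<forall>y\<in>Z. (x, y) \<notin> E) \<Longrightarrow> thesis"
      have "\<forall>x\<in>R. \<forall>y\<in>R. x \<noteq> y \<longrightarrow> (x, y) \<in> E" using R(3) symD'[OF af(3)] by blast
      then show thesis using th[OF R(1)] R(2) by blast
    next
      fix R assume R: "R \<subseteq> par ` T2" "card R = max n N0" "\<forall>x\<in>R. \<forall>y\<in>R. x \<noteq> y \<longrightarrow> (x, y) \<notin> E"
        and th: "\<And>Z. Z \<subseteq> par ` T2 \<Longrightarrow> card Z = n \<and> (\<forall>x\<in>Z. \<forall>y\<in>Z. x \<noteq> y \<longrightarrow> (x, y) \<in> E) \<or> card Z = max n N0 \<and> (\<forall>x\<in>Z. \<forall>y\<in>Z. (x, y) \<notin> E) \<Longrightarrow> thesis"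
      have "\<forall>x\<in>R. \<forall>y\<in>R. (x, y) \<notin> E" using R(3) af(4) by metis
      then show thesis using th[OF R(1)] R(2) by blast
    qed
    define X where "X = {y\<in>T2. par y \<in> Z}"
    have XT2: "X \<subseteq> T2" unfolding X_def by blast
    have pX: "par ` X = Z" unfolding X_def using Z(1) by blast
    have finX: "finite X" using XT2 finT2 by (rule finite_subset)
    have pinjX: "inj_on par X" using inj_on_subset[OF pinj XT2] .
    have cX: "card X = card Z" using card_image[OF pinjX] pX by simp
    have XV: "X \<subseteq> V" using XT2 T2T TL LV by blast
    have pXV: "par ` X \<subseteq> V" using pX Z(1) parL LV by blast
    have Xdis: "\<forall>x\<in>X. \<forall>y\<in>X. par x \<noteq> y" using pdis XT2 by blast
    have Xm: "\<forall>x\<in>X. \<forall>y\<in>X. (par x, y) \<in> E \<longleftrightarrow> x = y"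
    proof (intro ballI)
      fix x y assume "x \<in> X" "y \<in> X"
      then have "x \<in> T2" "y \<in> T2" using XT2 by blast+
      then show "(par x, y) \<in> E \<longleftrightarrow> x = y" using pm[rule_format] by blast
    qed
    have Xc1: "(\<forall>x\<in>X. \<forall>y\<in>X. x \<noteq> y \<longrightarrow> (x, y) \<in> E) \<or> (\<forall>x\<in>X. \<forall>y\<in>X. (x, y) \<notin> E)"
      using T2(3) XT2 by blast
    have pZ: "\<forall>x\<in>X. par x \<in> Z" unfolding X_def by blast
    have pXne: "\<forall>x\<in>X. \<forall>y\<in>X. x \<noteq> y \<longrightarrow> par x \<noteq> par y" using pinjX unfolding inj_on_def by blast
    show False
    proof (cases "(\<forall>x\<in>Z. \<forall>y\<in>Z. x \<noteq> y \<longrightarrow> (x, y) \<in> E) \<and> card Z = n")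
      case True
      have c2: "\<forall>x\<in>X. \<forall>y\<in>X. x \<noteq> y \<longrightarrow> (par x, par y) \<in> E"
        using True pZ pXne by blast
      show False
        by (rule mcase[OF amb finX _ XV pXV Xdis pinjX Xm Xc1]) (use True cX c2 in auto)
    next
      case False
      then have Zi: "card Z = max n N0" "\<forall>x\<in>Z. \<forall>y\<in>Z. (x, y) \<notin> E" using Z(2) by blast+
      have c2: "\<forall>x\<in>X. \<forall>y\<in>X. (par x, par y) \<notin> E" using Zi(2) pZ by blast
      show False
      proof (cases "\<forall>x\<in>X. \<forall>y\<in>X. x \<noteq> y \<longrightarrow> (x, y) \<in> E")
        case True
        show False
          by (rule mcase[OF amb finX _ XV pXV Xdis pinjX Xm Xc1]) (use True cX c2 Zi(1) in auto)
      next
        case False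
        then have Xi: "\<forall>x\<in>X. \<forall>y\<in>X. (x, y) \<notin> E" using Xc1 by blast
        define g' where "g' = inv_into X par"
        have g'X: "\<And>z. z \<in> Z \<Longrightarrow> g' z \<in> X" unfolding g'_def using pX by (metis inv_into_into)
        have pg': "\<And>z. z \<in> Z \<Longrightarrow> par (g' z) = z" unfolding g'_def using pX by (metis f_inv_into_f)
        have "Z \<subseteq> Ly E W r i" using Z(1) parL by blast
        moreover have "g' ` Z \<subseteq> Ly E W r (Suc i)" using g'X XT2 T2T TL by blast
        moreover have "\<forall>x\<in>Z. \<forall>y\<in>Z. (x, y) \<notin> E" using Zi(2) .
        moreover have "\<forall>x\<in>Z. \<forall>y\<in>Z. (g' x, g' y) \<notin> E" using g'X Xi by blast
        moreover have "\<forall>x\<in>Z. \<forall>y\<in>Z. (x, g' y) \<in> E \<longleftrightarrow> x = y"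
        proof (intro ballI)
          fix x y assume xy: "x \<in> Z" "y \<in> Z"
          have "(x, g' y) \<in> E \<longleftrightarrow> (par (g' x), g' y) \<in> E" using pg' xy by simp
          also have "\<dots> \<longleftrightarrow> g' x = g' y" using Xm g'X xy by blast
          also have "\<dots> \<longleftrightarrow> x = y" using pg' xy by metis
          finally show "(x, g' y) \<in> E \<longleftrightarrow> x = y" .
        qed
        moreover have "N0 \<le> card Z" using Zi(1) by simp
        ultimately have conj: "amb V E n \<and> W \<subseteq> V \<and> r \<in> W \<and> Z \<subseteq> Ly E W r i \<and>
          g' ` Z \<subseteq> Ly E W r (Suc i) \<and> (\<forall>x\<in>Z. \<forall>y\<in>Z. (x, y) \<notin> E) \<and> (\<forall>x\<in>Z. \<forall>y\<in>Z. (g' x, g' y) \<notin> E) \<and>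
          (\<forall>x\<in>Z. \<forall>y\<in>Z. (x, g' y) \<in> E \<longleftrightarrow> x = y) \<and> N0 \<le> card Z" using amb WV rW by simp
        show False using N0[unfolded Upprop_def, rule_format, OF conj] .
      qed
    qed
  qed
qed

lemma combine_N:
  fixes P :: "nat \<Rightarrow> nat \<Rightarrow> bool" and m :: nat
  assumes "\<forall>j. \<exists>N. P j N" "\<forall>j N N'. P j N \<longrightarrow> N \<le> N' \<longrightarrow> P j N'"
  shows "\<exists>N. \<forall>j<m. P j N"
proof (induction m)
  case 0 then show ?case by simp
next
  case (Suc m)
  obtain N where N: "\<forall>j<m. P j N" using Suc.IH by blast
  obtain N' where N': "P m N'" using assms(1) by blast
  have "\<forall>j<Suc m. P j (max N N')"
  proof (intro allI impI)
    fix j assume "j < Suc m"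
    then consider "j < m" | "j = m" by linarith
    then show "P j (max N N')"
    proof cases
      case 1 then show ?thesis using N assms(2) by (meson max.cobounded1)
    next
      case 2 then show ?thesis using N' assms(2) by (meson max.cobounded2)
    qed
  qed
  then show ?case by blast
qed

lemma Topprop_mono: "Topprop n k j N \<Longrightarrow> N \<le> N' \<Longrightarrow> Topprop n k j N'"
  unfolding Topprop_def by (meson le_trans)

lemma pigeon:
  assumes "finite S" "S \<subseteq> (\<Union>j<m. A j)" "m * c \<le> card S" "0 < m"
  shows "\<exists>j<m. c \<le> card (S \<inter> A j)"
proof (rule ccontr)
  assume "\<not> (\<exists>j<m. c \<le> card (S \<inter> A j))"
  then have lt: "\<forall>j<m. card (S \<inter> A j) < c" by (simp add: not_le)
  then have "card (S \<inter> A 0) < c" using assms(4) by simp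
  then have c0: "0 < c" by simp
  have "S = (\<Union>j<m. S \<inter> A j)" using assms(2) by blast
  moreover have "card (\<Union>j<m. S \<inter> A j) \<le> (\<Sum>j<m. card (S \<inter> A j))" by (rule card_UN_le) simp
  ultimately have "card S \<le> (\<Sum>j<m. card (S \<inter> A j))" by simp
  also have "\<dots> \<le> (\<Sum>j<m. c - 1)"
  proof (rule sum_mono)
    fix j assume "j \<in> {..<m}"
    then have "card (S \<inter> A j) < c" using lt by simp
    then show "card (S \<inter> A j) \<le> c - 1" by simp
  qed
  also have "\<dots> = m * (c - 1)" by simp
  also have "\<dots> < m * c" using c0 assms(4) by simp
  finally show False using assms(3) by simp
qed

lemma heavy_lem:
  "\<exists>N. \<forall>V E W S. amb V E n \<and> W \<subseteq> V \<and> conn E W \<and> S \<subseteq> W \<and> N \<le> card S \<longrightarrow>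
     (\<exists>d\<in>W. k \<le> card {s\<in>S. (d, s) \<in> E})"
proof -
  have "\<exists>N. \<forall>j<n. Topprop n k j N"
  proof (rule combine_N)
    show "\<forall>j. \<exists>N. Topprop n k j N" using top_lem by blast
    show "\<forall>j N N'. Topprop n k j N \<longrightarrow> N \<le> N' \<longrightarrow> Topprop n k j N'" using Topprop_mono by blast
  qed
  then obtain N' where N': "\<forall>j<n. Topprop n k j N'" by blast
  show ?thesis
  proof (intro exI[of _ "n * N' + 1"] allI impI)
    fix V E W S
    assume A: "amb V E n \<and> W \<subseteq> V \<and> conn E W \<and> S \<subseteq> W \<and> n * N' + 1 \<le> card S"
    have amb: "amb V E n" using A by (elim conjE) assumption
    have WV: "W \<subseteq> V" using A by (elim conjE) assumption
    have cW: "conn E W" using A by (elim conjE) assumption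
    have SW: "S \<subseteq> W" using A by (elim conjE) assumption
    have cS: "n * N' + 1 \<le> card S" using A by (elim conjE) assumption
    note af = amb_facts[OF amb]
    have "S \<subseteq> V" using SW WV by blast
    then have finS: "finite S" using af(1) by (rule finite_subset)
    have "S \<noteq> {}" using cS by auto
    then obtain r where rS: "r \<in> S" by blast
    then have rW: "r \<in> W" using SW by blast
    show "\<exists>d\<in>W. k \<le> card {s\<in>S. (d, s) \<in> E}"
    proof (rule ccontr)
      assume "\<not> (\<exists>d\<in>W. k \<le> card {s\<in>S. (d, s) \<in> E})"
      then have light: "\<forall>d\<in>W. card {s\<in>S. (d, s) \<in> E} < k" by (simp add: not_le)
      have "S \<subseteq> (\<Union>j<n. Ly E W r j)"
      proof
        fix v assume "v \<in> S"
        then have "v \<in> W" using SW by blast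
        then obtain j where "Suc j < n" "v \<in> Ly E W r j" using conn_layers[OF amb WV rW cW] by blast
        then show "v \<in> (\<Union>j<n. Ly E W r j)" by auto
      qed
      moreover have "n * N' \<le> card S" using cS by simp
      ultimately obtain j where j: "j < n" "N' \<le> card (S \<inter> Ly E W r j)"
        using pigeon[OF finS _ _ af(5)] by blast
      let ?T = "S \<inter> Ly E W r j"
      have "\<forall>w\<in>W. card {t\<in>?T. (w, t) \<in> E} < k"
      proof
        fix w assume "w \<in> W"
        have "card {t\<in>?T. (w, t) \<in> E} \<le> card {s\<in>S. (w, s) \<in> E}"
          by (rule card_mono) (use finS in auto)
        moreover have "card {s\<in>S. (w, s) \<in> E} < k" using light \<open>w \<in> W\<close> by blast
        ultimately show "card {t\<in>?T. (w, t) \<in> E} < k" by linarith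
      qed
      then have conj: "amb V E n \<and> W \<subseteq> V \<and> r \<in> W \<and> ?T \<subseteq> Ly E W r j \<and>
        N' \<le> card ?T \<and> (\<forall>w\<in>W. card {t\<in>?T. (w, t) \<in> E} < k)" using amb WV rW j by simp
      show False using N'[rule_format, OF j(1), unfolded Topprop_def, rule_format, OF conj] .
    qed
  qed
qed

lemma ramsey_E:
  fixes X :: "nat set"
  assumes R: "\<forall>(X::nat set) (P::nat \<Rightarrow> nat \<Rightarrow> bool). finite X \<and> card X \<ge> N \<longrightarrow>
     (\<exists>R\<subseteq>X. card R = a \<and> (\<forall>x\<in>R. \<forall>y\<in>R. x \<noteq> y \<longrightarrow> P x y \<or> P y x)) \<or>
     (\<exists>R\<subseteq>X. card R = b \<and> (\<forall>x\<in>R. \<forall>y\<in>R. x \<noteq> y \<longrightarrow> \<not> P x y))"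
    and fin: "finite X" "N \<le> card X" and symE: "sym E" and irr: "\<forall>x. (x, x) \<notin> E"
  obtains R where "R \<subseteq> X" "card R = a" "\<forall>x\<in>R. \<forall>y\<in>R. x \<noteq> y \<longrightarrow> (x, y) \<in> E"
    | R where "R \<subseteq> X" "card R = b" "\<forall>x\<in>R. \<forall>y\<in>R. (x, y) \<notin> E"
proof -
  have "(\<exists>R\<subseteq>X. card R = a \<and> (\<forall>x\<in>R. \<forall>y\<in>R. x \<noteq> y \<longrightarrow> (x, y) \<in> E \<or> (y, x) \<in> E)) \<or>
     (\<exists>R\<subseteq>X. card R = b \<and> (\<forall>x\<in>R. \<forall>y\<in>R. x \<noteq> y \<longrightarrow> (x, y) \<notin> E))"
    using R[rule_format, of X "\<lambda>u v. (u, v) \<in> E"] fin by simp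
  then show ?thesis
  proof (elim disjE exE conjE)
    fix R assume R: "R \<subseteq> X" "card R = a" "\<forall>x\<in>R. \<forall>y\<in>R. x \<noteq> y \<longrightarrow> (x, y) \<in> E \<or> (y, x) \<in> E"
    have "\<forall>x\<in>R. \<forall>y\<in>R. x \<noteq> y \<longrightarrow> (x, y) \<in> E" using R(3) symD'[OF symE] by blast
    then show thesis using that(1)[OF R(1,2)] by blast
  next
    fix R assume R: "R \<subseteq> X" "card R = b" "\<forall>x\<in>R. \<forall>y\<in>R. x \<noteq> y \<longrightarrow> (x, y) \<notin> E"
    have "\<forall>x\<in>R. \<forall>y\<in>R. (x, y) \<notin> E"
    proof (intro ballI)
      fix x y assume "x \<in> R" "y \<in> R"
      then show "(x, y) \<notin> E" using R(3) irr by (cases "x = y") auto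
    qed
    then show thesis using that(2)[OF R(1,2)] by blast
  qed
qed

lemma out_lem:
  "\<exists>k0. \<forall>V E d Y p. amb V E n \<and> d \<in> V \<and> Y \<subseteq> V \<and>
     (\<forall>y\<in>Y. (d, y) \<in> E \<and> p y \<in> V \<and> p y \<noteq> d \<and> (d, p y) \<notin> E \<and> (y, p y) \<in> E) \<and> k0 \<le> card Y \<longrightarrow> False"
proof -
  obtain R3 where R3: "\<forall>(X::nat set) (P::nat \<Rightarrow> nat \<Rightarrow> bool). finite X \<and> card X \<ge> R3 \<longrightarrow>
     (\<exists>R\<subseteq>X. card R = n \<and> (\<forall>x\<in>R. \<forall>y\<in>R. x \<noteq> y \<longrightarrow> P x y \<or> P y x)) \<or>
     (\<exists>R\<subseteq>X. card R = n \<and> (\<forall>x\<in>R. \<forall>y\<in>R. x \<noteq> y \<longrightarrow> \<not> P x y))"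
    using ramsey_rel[of n n] by blast
  obtain N4 where N4: "\<forall>(X::nat set) (p::nat\<Rightarrow>nat) (E::(nat\<times>nat) set). finite X \<and> card X \<ge> N4 \<and>
     (\<forall>x\<in>X. card {y\<in>X. (p x, y) \<in> E} < n) \<longrightarrow>
     (\<exists>X'\<subseteq>X. card X' = R3 \<and> (\<forall>x\<in>X'. \<forall>y\<in>X'. x \<noteq> y \<longrightarrow> (p x, y) \<notin> E))"
    using extract_lem[of n R3] by blast
  obtain N5 where N5: "\<forall>(X::nat set) (P::nat \<Rightarrow> nat \<Rightarrow> bool). finite X \<and> card X \<ge> N5 \<longrightarrow>
     (\<exists>R\<subseteq>X. card R = N4 \<and> (\<forall>x\<in>R. \<forall>y\<in>R. x \<noteq> y \<longrightarrow> P x y \<or> P y x)) \<or>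
     (\<exists>R\<subseteq>X. card R = N4 \<and> (\<forall>x\<in>R. \<forall>y\<in>R. x \<noteq> y \<longrightarrow> \<not> P x y))"
    using ramsey_rel[of N4 N4] by blast
  show ?thesis
  proof (intro exI[of _ N5] allI impI)
    fix V E d Y p
    assume A: "amb V E n \<and> d \<in> V \<and> Y \<subseteq> V \<and>
     (\<forall>y\<in>Y. (d, y) \<in> E \<and> p y \<in> V \<and> p y \<noteq> d \<and> (d, p y) \<notin> E \<and> (y, p y) \<in> E) \<and> N5 \<le> card Y"
    have amb: "amb V E n" using A by (elim conjE) assumption
    have dV: "d \<in> V" using A by (elim conjE) assumption
    have YV: "Y \<subseteq> V" using A by (elim conjE) assumption
    have Yp: "\<forall>y\<in>Y. (d, y) \<in> E \<and> p y \<in> V \<and> p y \<noteq> d \<and> (d, p y) \<notin> E \<and> (y, p y) \<in> E" using A by (elim conjE) assumption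
    have cY: "N5 \<le> card Y" using A by (elim conjE) assumption
    note af = amb_facts[OF amb]
    have finY: "finite Y" using YV af(1) by (rule finite_subset)
    obtain Y2 where Y2: "Y2 \<subseteq> Y" "card Y2 = N4"
      "(\<forall>x\<in>Y2. \<forall>y\<in>Y2. x \<noteq> y \<longrightarrow> (x, y) \<in> E) \<or> (\<forall>x\<in>Y2. \<forall>y\<in>Y2. (x, y) \<notin> E)"
      by (rule ramsey_E[OF N5 finY cY af(3) af(4)]) blast+
    have finY2: "finite Y2" using Y2(1) finY by (rule finite_subset)
    have dY2: "\<forall>y\<in>Y2. d \<noteq> y"
    proof
      fix y assume "y \<in> Y2" then have "(d, y) \<in> E" using Yp Y2(1) by blast
      then show "d \<noteq> y" using af(4) by auto
    qed
    show False
    proof (cases "\<exists>q\<in>V. q \<noteq> d \<and> (d, q) \<notin> E \<and> n \<le> card {y\<in>Y2. (q, y) \<in> E}")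
      case True
      then obtain q where q: "q \<in> V" "q \<noteq> d" "(d, q) \<notin> E" "n \<le> card {y\<in>Y2. (q, y) \<in> E}" by blast
      obtain X where X: "X \<subseteq> {y\<in>Y2. (q, y) \<in> E}" "card X = n"
        using obtain_subset_with_card_n[OF q(4)] by blast
      have XY2: "X \<subseteq> Y2" using X by blast
      have finX: "finite X" using XY2 finY2 by (rule finite_subset)
      have XV: "X \<subseteq> V" using XY2 Y2(1) YV by blast
      have dX: "d \<notin> X" using dY2 XY2 by blast
      have qX: "q \<notin> X"
      proof
        assume "q \<in> X" then have "(q, q) \<in> E" using X by blast
        then show False using af(4) by blast
      qed
      have adj: "\<forall>x\<in>X. (d, x) \<in> E \<and> (q, x) \<in> E" using X Yp Y2(1) by blast
      have dq: "d \<noteq> q" using q(2) by simp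
      note two = pat_two[OF finX X(2) XV dV q(1) dX qX dq af(3) af(4) q(3) adj]
      from Y2(3) show False
      proof
        assume "\<forall>x\<in>Y2. \<forall>y\<in>Y2. x \<noteq> y \<longrightarrow> (x, y) \<in> E"
        then have "\<forall>x\<in>X. \<forall>y\<in>X. x \<noteq> y \<longrightarrow> (x, y) \<in> E" using XY2 by blast
        with af(10) two(2) show False by blast
      next
        assume "\<forall>x\<in>Y2. \<forall>y\<in>Y2. (x, y) \<notin> E"
        then have "\<forall>x\<in>X. \<forall>y\<in>X. (x, y) \<notin> E" using XY2 by blast
        with af(9) two(1) show False by blast
      qed
    next
      case False
      have F: "\<forall>q\<in>V. q \<noteq> d \<and> (d, q) \<notin> E \<longrightarrow> card {y\<in>Y2. (q, y) \<in> E} < n"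
        using False by (auto simp: not_le)
      have light: "\<forall>y\<in>Y2. card {y'\<in>Y2. (p y, y') \<in> E} < n"
      proof
        fix y assume y: "y \<in> Y2"
        then have "p y \<in> V" "p y \<noteq> d" "(d, p y) \<notin> E" using Yp Y2(1) by blast+
        then show "card {y'\<in>Y2. (p y, y') \<in> E} < n" using F by blast
      qed
      then have "finite Y2 \<and> card Y2 \<ge> N4 \<and> (\<forall>y\<in>Y2. card {y'\<in>Y2. (p y, y') \<in> E} < n)" using finY2 Y2(2) by simp
      from N4[rule_format, OF this]
      obtain Y3 where Y3: "Y3 \<subseteq> Y2" "card Y3 = R3" "\<forall>x\<in>Y3. \<forall>y\<in>Y3. x \<noteq> y \<longrightarrow> (p x, y) \<notin> E"
        by blast
      have finY3: "finite Y3" using Y3(1) finY2 by (rule finite_subset)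
      have Y3Y: "Y3 \<subseteq> Y" using Y3(1) Y2(1) by blast
      have pE: "\<And>y. y \<in> Y3 \<Longrightarrow> (p y, y) \<in> E" using Yp Y3Y symD'[OF af(3)] by blast
      have pm: "\<forall>x\<in>Y3. \<forall>y\<in>Y3. (p x, y) \<in> E \<longleftrightarrow> x = y"
      proof (intro ballI)
        fix x y assume xy: "x \<in> Y3" "y \<in> Y3"
        show "(p x, y) \<in> E \<longleftrightarrow> x = y"
        proof (cases "x = y")
          case True then show ?thesis using pE xy by blast
        next
          case False then show ?thesis using Y3(3) xy by blast
        qed
      qed
      have pinj: "inj_on p Y3"
        unfolding inj_on_def
      proof (intro ballI impI)
        fix x y assume xy: "x \<in> Y3" "y \<in> Y3" "p x = p y"
        then have "(p x, y) \<in> E" using pE by auto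
        then show "x = y" using pm xy by blast
      qed
      have finZ0: "finite (p ` Y3)" using finY3 by simp
      have cZ0: "R3 \<le> card (p ` Y3)" using card_image[OF pinj] Y3(2) by simp
      have pV: "p ` Y3 \<subseteq> V" using Yp Y3Y by blast
      have pdis: "\<forall>x\<in>Y3. \<forall>y\<in>Y3. p x \<noteq> y"
      proof (intro ballI)
        fix x y assume xy: "x \<in> Y3" "y \<in> Y3"
        show "p x \<noteq> y"
        proof
          assume "p x = y" then have "(d, p x) \<in> E" using Yp Y3Y xy by blast
          then show False using Yp Y3Y xy by blast
        qed
      qed
      obtain Z where Z: "Z \<subseteq> p ` Y3" "card Z = n"
        "(\<forall>x\<in>Z. \<forall>y\<in>Z. x \<noteq> y \<longrightarrow> (x, y) \<in> E) \<or> (\<forall>x\<in>Z. \<forall>y\<in>Z. (x, y) \<notin> E)"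
        by (rule ramsey_E[OF R3 finZ0 cZ0 af(3) af(4)]) blast+
      define X where "X = {y\<in>Y3. p y \<in> Z}"
      have XY3: "X \<subseteq> Y3" unfolding X_def by blast
      have pX: "p ` X = Z" unfolding X_def using Z(1) by blast
      have finX: "finite X" using XY3 finY3 by (rule finite_subset)
      have pinjX: "inj_on p X" using inj_on_subset[OF pinj XY3] .
      have cX: "card X = n" using card_image[OF pinjX] pX Z(2) by simp
      have XV: "X \<subseteq> V" using XY3 Y3Y YV by blast
      have pXV: "p ` X \<subseteq> V" using pX Z(1) pV by blast
      have Xdis: "\<forall>x\<in>X. \<forall>y\<in>X. p x \<noteq> y" using pdis XY3 by blast
      have Xm: "\<forall>x\<in>X. \<forall>y\<in>X. (p x, y) \<in> E \<longleftrightarrow> x = y"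
      proof (intro ballI)
        fix x y assume "x \<in> X" "y \<in> X"
        then have "x \<in> Y3" "y \<in> Y3" using XY3 by blast+
        then show "(p x, y) \<in> E \<longleftrightarrow> x = y" using pm[rule_format] by blast
      qed
      have XY2: "X \<subseteq> Y2" using XY3 Y3(1) by blast
      have Xc1: "(\<forall>x\<in>X. \<forall>y\<in>X. x \<noteq> y \<longrightarrow> (x, y) \<in> E) \<or> (\<forall>x\<in>X. \<forall>y\<in>X. (x, y) \<notin> E)"
        using Y2(3) XY2 by blast
      have pZ: "\<forall>x\<in>X. p x \<in> Z" unfolding X_def by blast
      have pXne: "\<forall>x\<in>X. \<forall>y\<in>X. x \<noteq> y \<longrightarrow> p x \<noteq> p y" using pinjX unfolding inj_on_def by blast
      have Xc2: "(\<forall>x\<in>X. \<forall>y\<in>X. x \<noteq> y \<longrightarrow> (p x, p y) \<in> E) \<or> (\<forall>x\<in>X. \<forall>y\<in>X. (p x, p y) \<notin> E)"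
        using Z(3) pZ pXne by blast
      show False
      proof (cases "(\<forall>x\<in>X. \<forall>y\<in>X. x \<noteq> y \<longrightarrow> (x, y) \<in> E) \<or> (\<forall>x\<in>X. \<forall>y\<in>X. x \<noteq> y \<longrightarrow> (p x, p y) \<in> E)")
        case True
        show False
          by (rule mcase[OF amb finX _ XV pXV Xdis pinjX Xm Xc1 Xc2 True]) (use cX in simp)
      next
        case False
        then have Xi: "\<forall>x\<in>X. \<forall>y\<in>X. (x, y) \<notin> E" "\<forall>x\<in>X. \<forall>y\<in>X. (p x, p y) \<notin> E"
          using Xc1 Xc2 by blast+
        have "induced_sub (star_subdiv n) (V, E)"
        proof (rule pat_SS[OF finX cX XV pXV dV Xdis _ _ pinjX af(3) af(4) Xm Xi])
          show "d \<notin> X" using dY2 XY2 by blast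
          show "d \<notin> p ` X" using Yp XY2 Y2(1) by fastforce
          show "\<forall>x\<in>X. (d, x) \<in> E \<and> (d, p x) \<notin> E" using Yp XY2 Y2(1) by blast
        qed
        with af(8) show False by (rule notE)
      qed
    qed
  qed
qed

definition gcomp :: "(nat \<times> nat) set \<Rightarrow> nat set \<Rightarrow> nat \<Rightarrow> nat set" where
  "gcomp E W y = {u\<in>W. (y, u) \<in> (E \<inter> W \<times> W)\<^sup>*}"

lemma comp_sub: "gcomp E W y \<subseteq> W" unfolding gcomp_def by blast

lemma comp_self: "y \<in> W \<Longrightarrow> y \<in> gcomp E W y" unfolding gcomp_def by blast

lemma comp_step: "u \<in> gcomp E W y \<Longrightarrow> v \<in> W \<Longrightarrow> (u, v) \<in> E \<Longrightarrow> v \<in> gcomp E W y"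
  unfolding gcomp_def by (auto intro: rtrancl_into_rtrancl)

lemma sym_restr: "sym E \<Longrightarrow> sym (E \<inter> C \<times> C)"
  unfolding sym_def by blast

lemma comp_conn:
  assumes "sym E" "y \<in> W"
  shows "conn E (gcomp E W y)"
proof -
  let ?C = "gcomp E W y"
  have fw: "(y, u) \<in> (E \<inter> ?C \<times> ?C)\<^sup>*" if "(y, u) \<in> (E \<inter> W \<times> W)\<^sup>*" for u
    using that
  proof (induction rule: rtrancl_induct)
    case base then show ?case by simp
  next
    case (step a b)
    have "a \<in> ?C" using step.hyps unfolding gcomp_def by blast
    moreover have "b \<in> ?C" using step.hyps unfolding gcomp_def by (auto intro: rtrancl_into_rtrancl)
    ultimately have "(a, b) \<in> E \<inter> ?C \<times> ?C" using step.hyps by blast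
    then show ?case using step.IH by (rule rtrancl_into_rtrancl[rotated])
  qed
  have sC: "sym ((E \<inter> ?C \<times> ?C)\<^sup>*)" using sym_rtrancl[OF sym_restr[OF assms(1)]] .
  show ?thesis unfolding conn_def
  proof (intro ballI)
    fix u v assume uv: "u \<in> ?C" "v \<in> ?C"
    have "(y, u) \<in> (E \<inter> ?C \<times> ?C)\<^sup>*" using fw uv(1) unfolding gcomp_def by blast
    then have "(u, y) \<in> (E \<inter> ?C \<times> ?C)\<^sup>*" using sC unfolding sym_def by blast
    moreover have "(y, v) \<in> (E \<inter> ?C \<times> ?C)\<^sup>*" using fw uv(2) unfolding gcomp_def by blast
    ultimately show "(u, v) \<in> (E \<inter> ?C \<times> ?C)\<^sup>*" by (rule rtrancl_trans)
  qed
qed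

lemma comp_eq:
  assumes "sym E" "z \<in> gcomp E W y"
  shows "gcomp E W z = gcomp E W y"
proof -
  have s: "sym ((E \<inter> W \<times> W)\<^sup>*)" using sym_rtrancl[OF sym_restr[OF assms(1)]] .
  have yz: "(y, z) \<in> (E \<inter> W \<times> W)\<^sup>*" using assms(2) unfolding gcomp_def by blast
  then have zy: "(z, y) \<in> (E \<inter> W \<times> W)\<^sup>*" using s unfolding sym_def by blast
  show ?thesis unfolding gcomp_def
  proof (intro Collect_cong conj_cong refl iffI)
    fix u assume "(z, u) \<in> (E \<inter> W \<times> W)\<^sup>*" then show "(y, u) \<in> (E \<inter> W \<times> W)\<^sup>*" using yz by (rule rtrancl_trans[rotated])
  next
    fix u assume "(y, u) \<in> (E \<inter> W \<times> W)\<^sup>*" then show "(z, u) \<in> (E \<inter> W \<times> W)\<^sup>*" using zy by (rule rtrancl_trans[rotated])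
  qed
qed

lemma comp_disj:
  assumes "sym E" "u \<in> gcomp E W y1" "v \<in> gcomp E W y2" "gcomp E W y1 \<noteq> gcomp E W y2"
  shows "u \<noteq> v" "(u, v) \<notin> E"
proof -
  show "u \<noteq> v"
  proof
    assume uv: "u = v"
    have "gcomp E W u = gcomp E W y1" using comp_eq[OF assms(1) assms(2)] .
    moreover have "gcomp E W v = gcomp E W y2" using comp_eq[OF assms(1) assms(3)] .
    ultimately show False using assms(4) uv by simp
  qed
  show "(u, v) \<notin> E"
  proof
    assume e: "(u, v) \<in> E"
    have "v \<in> W" using assms(3) comp_sub by blast
    then have "v \<in> gcomp E W y1" using comp_step[OF assms(2) _ e] by blast
    then have "gcomp E W v = gcomp E W y1" using comp_eq[OF assms(1)] by blast
    moreover have "gcomp E W v = gcomp E W y2" using comp_eq[OF assms(1) assms(3)] .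
    ultimately show False using assms(4) by simp
  qed
qed

definition Mainprop :: "nat \<Rightarrow> nat \<Rightarrow> nat \<Rightarrow> bool" where
  "Mainprop n t c \<longleftrightarrow> (\<forall>V E W K. amb V E n \<and> W \<subseteq> V \<and> conn E W \<and> K \<subseteq> V \<and> W \<inter> K = {} \<and>
     (\<forall>x\<in>K. \<forall>y\<in>K. x \<noteq> y \<longrightarrow> (x, y) \<in> E) \<and> (\<forall>x\<in>K. \<forall>w\<in>W. (x, w) \<in> E) \<and> n \<le> card K + t + 1
     \<longrightarrow> card (Bset E W) < c)"

lemma main_base: "Mainprop n 0 1"
  unfolding Mainprop_def
proof (intro allI impI)
  fix V E W K
  assume A: "amb V E n \<and> W \<subseteq> V \<and> conn E W \<and> K \<subseteq> V \<and> W \<inter> K = {} \<and>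
     (\<forall>x\<in>K. \<forall>y\<in>K. x \<noteq> y \<longrightarrow> (x, y) \<in> E) \<and> (\<forall>x\<in>K. \<forall>w\<in>W. (x, w) \<in> E) \<and> n \<le> card K + 0 + 1"
  have amb: "amb V E n" using A by (elim conjE) assumption
  have WV: "W \<subseteq> V" using A by (elim conjE) assumption
  have KV: "K \<subseteq> V" using A by (elim conjE) assumption
  have WK: "W \<inter> K = {}" using A by (elim conjE) assumption
  have Kc: "\<forall>x\<in>K. \<forall>y\<in>K. x \<noteq> y \<longrightarrow> (x, y) \<in> E" using A by (elim conjE) assumption
  have KW: "\<forall>x\<in>K. \<forall>w\<in>W. (x, w) \<in> E" using A by (elim conjE) assumption
  have nK: "n \<le> card K + 0 + 1" using A by (elim conjE) assumption
  note af = amb_facts[OF amb]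
  have "Bset E W = {}"
  proof (rule ccontr)
    assume "Bset E W \<noteq> {}"
    then obtain b where b: "b \<in> Bset E W" by blast
    then obtain a c where ac: "b \<in> W" "a \<in> W" "c \<in> W" "a \<noteq> c" "(b, a) \<in> E" "(b, c) \<in> E" "(a, c) \<notin> E"
      unfolding Bset_def by blast
    have "n - 1 \<le> card K" using nK by simp
    then obtain K' where K': "K' \<subseteq> K" "card K' = n - 1" using obtain_subset_with_card_n by blast
    have finK: "finite K" using KV af(1) by (rule finite_subset)
    have finK': "finite K'" using K'(1) finK by (rule finite_subset)
    have bK': "b \<notin> K'" using ac(1) WK K'(1) by blast
    let ?X = "insert b K'"
    have finX: "finite ?X" using finK' by simp
    have cX: "card ?X = n" using bK' finK' K'(2) af(5) by simp
    have XV: "?X \<subseteq> V" using ac(1) WV K'(1) KV by blast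
    have aV: "a \<in> V" "c \<in> V" using ac WV by blast+
    have ab: "a \<noteq> b" "c \<noteq> b" using ac(5,6) af(4) by blast+
    have aX: "a \<notin> ?X" using ab ac(2) WK K'(1) by blast
    have cX': "c \<notin> ?X" using ab ac(3) WK K'(1) by blast
    have sE: "\<And>x y. (x, y) \<in> E \<longleftrightarrow> (y, x) \<in> E" using symD'[OF af(3)] by blast
    have adj: "\<forall>x\<in>?X. (a, x) \<in> E \<and> (c, x) \<in> E"
    proof
      fix x assume "x \<in> ?X"
      then consider "x = b" | "x \<in> K" using K'(1) by blast
      then show "(a, x) \<in> E \<and> (c, x) \<in> E"
      proof cases
        case 1 then show ?thesis using ac(5,6) sE by blast
      next
        case 2 then show ?thesis using KW ac(2,3) sE by blast
      qed
    qed
    have cl: "\<forall>x\<in>?X. \<forall>y\<in>?X. x \<noteq> y \<longrightarrow> (x, y) \<in> E"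
    proof (intro ballI impI)
      fix x y assume xy: "x \<in> ?X" "y \<in> ?X" "x \<noteq> y"
      show "(x, y) \<in> E"
      proof (cases "x = b")
        case True
        then have "y \<in> K" using xy K'(1) by blast
        then show ?thesis using KW ac(1) True sE by blast
      next
        case False
        then have xK: "x \<in> K" using xy K'(1) by blast
        show ?thesis
        proof (cases "y = b")
          case True then show ?thesis using KW ac(1) xK by blast
        next
          case False then have "y \<in> K" using xy K'(1) by blast
          then show ?thesis using Kc xK xy(3) by blast
        qed
      qed
    qed
    have "induced_sub (join (edgeless 2) (complete n)) (V, E)"
      using pat_two(2)[OF finX cX XV aV aX cX' ac(4) af(3) af(4) ac(7) adj cl] .
    with af(10) show False by (rule notE)
  qed
  then show "card (Bset E W) < 1" by simp
qed

lemma p3_table: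
  assumes "(a, b) \<in> E" "(b, c) \<in> E" "(a, c) \<notin> E" "sym E" "\<forall>x. (x, x) \<notin> E" "j < 3" "j' < 3"
  shows "([a, b, c] ! j, [a, b, c] ! j') \<in> E \<longleftrightarrow> (j' = Suc j \<or> j = Suc j')"
proof -
  have s: "\<And>x y. (x, y) \<in> E \<longleftrightarrow> (y, x) \<in> E" using symD'[OF assms(4)] by blast
  have j: "j = 0 \<or> j = 1 \<or> j = 2" "j' = 0 \<or> j' = 1 \<or> j' = 2" using assms(6,7) by auto
  show ?thesis using j assms(1,2,3,5) s by auto
qed

lemma main_step:
  assumes IH: "Mainprop n t ct"
  shows "\<exists>c. Mainprop n (Suc t) c"
proof -
  obtain k0 where k0: "\<forall>V E d Y p. amb V E n \<and> d \<in> V \<and> Y \<subseteq> V \<and>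
     (\<forall>y\<in>Y. (d, y) \<in> E \<and> p y \<in> V \<and> p y \<noteq> d \<and> (d, p y) \<notin> E \<and> (y, p y) \<in> E) \<and> k0 \<le> card Y \<longrightarrow> False"
    using out_lem[of n] by blast
  define k where "k = k0 + n * ct + 1"
  obtain N where N: "\<forall>V E W S. amb V E n \<and> W \<subseteq> V \<and> conn E W \<and> S \<subseteq> W \<and> N \<le> card S \<longrightarrow>
     (\<exists>d\<in>W. k \<le> card {s\<in>S. (d, s) \<in> E})"
    using heavy_lem[of n k] by blast
  show ?thesis unfolding Mainprop_def
  proof (intro exI[of _ N] allI impI)
    fix V E W K
    assume A: "amb V E n \<and> W \<subseteq> V \<and> conn E W \<and> K \<subseteq> V \<and> W \<inter> K = {} \<and>
     (\<forall>x\<in>K. \<forall>y\<in>K. x \<noteq> y \<longrightarrow> (x, y) \<in> E) \<and> (\<forall>x\<in>K. \<forall>w\<in>W. (x, w) \<in> E) \<and> n \<le> card K + Suc t + 1"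
    have amb: "amb V E n" using A by (elim conjE) assumption
    have WV: "W \<subseteq> V" using A by (elim conjE) assumption
    have cW: "conn E W" using A by (elim conjE) assumption
    have KV: "K \<subseteq> V" using A by (elim conjE) assumption
    have WK: "W \<inter> K = {}" using A by (elim conjE) assumption
    have Kc: "\<forall>x\<in>K. \<forall>y\<in>K. x \<noteq> y \<longrightarrow> (x, y) \<in> E" using A by (elim conjE) assumption
    have KW: "\<forall>x\<in>K. \<forall>w\<in>W. (x, w) \<in> E" using A by (elim conjE) assumption
    have nK: "n \<le> card K + Suc t + 1" using A by (elim conjE) assumption
    note af = amb_facts[OF amb]
    have sE: "\<And>x y. (x, y) \<in> E \<longleftrightarrow> (y, x) \<in> E" using symD'[OF af(3)] by blast
    have irr: "\<And>x. (x, x) \<notin> E" using af(4) by blast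
    have finW: "finite W" using WV af(1) by (rule finite_subset)
    have finK: "finite K" using KV af(1) by (rule finite_subset)
    show "card (Bset E W) < N"
    proof (rule ccontr)
      assume "\<not> card (Bset E W) < N"
      then have "N \<le> card (Bset E W)" by simp
      moreover have "Bset E W \<subseteq> W" unfolding Bset_def by blast
      ultimately have "amb V E n \<and> W \<subseteq> V \<and> conn E W \<and> Bset E W \<subseteq> W \<and> N \<le> card (Bset E W)"
        using amb WV cW by simp
      from N[rule_format, OF this] obtain d where d: "d \<in> W" "k \<le> card {s\<in>Bset E W. (d, s) \<in> E}" by blast
      define Y where "Y = {s\<in>Bset E W. (d, s) \<in> E}"
      have finY: "finite Y" unfolding Y_def Bset_def using finW by simp
      have YW: "Y \<subseteq> W" unfolding Y_def Bset_def by blast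
      define W' where "W' = {w\<in>W. (d, w) \<in> E}"
      have W'W: "W' \<subseteq> W" unfolding W'_def by blast
      have dW': "d \<notin> W'" unfolding W'_def using irr by blast
      define Yout where "Yout = {y\<in>Y. \<exists>p\<in>W. (y, p) \<in> E \<and> p \<noteq> d \<and> (d, p) \<notin> E}"
      define Yin where "Yin = Y - Yout"
      have finYout: "finite Yout" unfolding Yout_def using finY by simp
      have finYin: "finite Yin" unfolding Yin_def using finY by simp
      have cYout: "card Yout < k0"
      proof (rule ccontr)
        assume "\<not> card Yout < k0"
        then have ck: "k0 \<le> card Yout" by simp
        define pp where "pp y = (SOME p. p \<in> W \<and> (y, p) \<in> E \<and> p \<noteq> d \<and> (d, p) \<notin> E)" for y
        have pp: "pp y \<in> W \<and> (y, pp y) \<in> E \<and> pp y \<noteq> d \<and> (d, pp y) \<notin> E" if "y \<in> Yout" for y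
        proof -
          have "\<exists>p. p \<in> W \<and> (y, p) \<in> E \<and> p \<noteq> d \<and> (d, p) \<notin> E" using that unfolding Yout_def by blast
          then show ?thesis unfolding pp_def by (rule someI_ex)
        qed
        have "\<forall>y\<in>Yout. (d, y) \<in> E \<and> pp y \<in> V \<and> pp y \<noteq> d \<and> (d, pp y) \<notin> E \<and> (y, pp y) \<in> E"
        proof
          fix y assume y: "y \<in> Yout"
          then have "(d, y) \<in> E" unfolding Yout_def Y_def by blast
          then show "(d, y) \<in> E \<and> pp y \<in> V \<and> pp y \<noteq> d \<and> (d, pp y) \<notin> E \<and> (y, pp y) \<in> E"
            using pp[OF y] WV by blast
        qed
        moreover have "Yout \<subseteq> V" unfolding Yout_def using YW WV by blast
        moreover have "d \<in> V" using d(1) WV by blast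
        ultimately have "amb V E n \<and> d \<in> V \<and> Yout \<subseteq> V \<and>
          (\<forall>y\<in>Yout. (d, y) \<in> E \<and> pp y \<in> V \<and> pp y \<noteq> d \<and> (d, pp y) \<notin> E \<and> (y, pp y) \<in> E) \<and> k0 \<le> card Yout"
          using amb ck by simp
        from k0[rule_format, OF this] show False .
      qed
      have "Y = Yout \<union> Yin" unfolding Yin_def Yout_def by blast
      then have "card Y \<le> card Yout + card Yin" by (metis card_Un_le)
      moreover have "k \<le> card Y" using d(2) unfolding Y_def .
      ultimately have cYin: "n * ct + 1 \<le> card Yin" using cYout unfolding k_def by linarith
      have YinB: "Yin \<subseteq> Bset E W'"
      proof
        fix y assume y: "y \<in> Yin"
        then have yB: "y \<in> Bset E W" "(d, y) \<in> E" and nout: "\<forall>p\<in>W. (y, p) \<in> E \<longrightarrow> p = d \<or> (d, p) \<in> E"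
          unfolding Yin_def Yout_def Y_def by blast+
        obtain a c where ac: "y \<in> W" "a \<in> W" "c \<in> W" "a \<noteq> c" "(y, a) \<in> E" "(y, c) \<in> E" "(a, c) \<notin> E"
          using yB(1) unfolding Bset_def by blast
        have "a = d \<or> (d, a) \<in> E" "c = d \<or> (d, c) \<in> E" using nout ac by blast+
        then have da: "(d, a) \<in> E" "(d, c) \<in> E" using ac(4,7) sE by blast+
        then have "a \<in> W'" "c \<in> W'" "y \<in> W'" using ac yB(2) unfolding W'_def by blast+
        then show "y \<in> Bset E W'" using ac unfolding Bset_def by blast
      qed
      have YinW': "Yin \<subseteq> W'" using YinB unfolding Bset_def by blast
      define Cs where "Cs = gcomp E W' ` Yin"
      have finCs: "finite Cs" unfolding Cs_def using finYin by simp
      have cCs: "card Cs < n"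
      proof (rule ccontr)
        assume "\<not> card Cs < n"
        then have "n \<le> card Cs" by simp
        then obtain Cs' where Cs': "Cs' \<subseteq> Cs" "card Cs' = n" using obtain_subset_with_card_n by blast
        have finCs': "finite Cs'" using Cs'(1) finCs by (rule finite_subset)
        obtain h where hC: "\<And>i. i < n \<Longrightarrow> h i \<in> Cs'" and hinj: "\<And>i j. i < n \<Longrightarrow> j < n \<Longrightarrow> h i = h j \<longleftrightarrow> i = j"
          using enum_set[OF finCs' Cs'(2)] by metis
        define yy where "yy i = (SOME y. y \<in> Yin \<and> gcomp E W' y = h i)" for i
        have yy: "yy i \<in> Yin \<and> gcomp E W' (yy i) = h i" if "i < n" for i
        proof -
          have "\<exists>y. y \<in> Yin \<and> gcomp E W' y = h i" using hC[OF that] Cs'(1) unfolding Cs_def by blast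
          then show ?thesis unfolding yy_def by (rule someI_ex)
        qed
        define wit where "wit i = (SOME ac. fst ac \<in> W' \<and> snd ac \<in> W' \<and> fst ac \<noteq> snd ac \<and> (yy i, fst ac) \<in> E \<and> (yy i, snd ac) \<in> E \<and> (fst ac, snd ac) \<notin> E)" for i
        have wit: "fst (wit i) \<in> W' \<and> snd (wit i) \<in> W' \<and> fst (wit i) \<noteq> snd (wit i) \<and> (yy i, fst (wit i)) \<in> E \<and> (yy i, snd (wit i)) \<in> E \<and> (fst (wit i), snd (wit i)) \<notin> E"
          if "i < n" for i
        proof -
          have "yy i \<in> Bset E W'" using yy[OF that] YinB by blast
          then obtain a c where "a \<in> W'" "c \<in> W'" "a \<noteq> c" "(yy i, a) \<in> E" "(yy i, c) \<in> E" "(a, c) \<notin> E"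
            unfolding Bset_def by blast
          then have "\<exists>ac. fst ac \<in> W' \<and> snd ac \<in> W' \<and> fst ac \<noteq> snd ac \<and> (yy i, fst ac) \<in> E \<and> (yy i, snd ac) \<in> E \<and> (fst ac, snd ac) \<notin> E"
            by (intro exI[of _ "(a, c)"]) simp
          then show ?thesis unfolding wit_def by (rule someI_ex)
        qed
        define T where "T i j = [fst (wit i), yy i, snd (wit i)] ! j" for i j
        have j3: "\<And>j::nat. j < 3 \<longleftrightarrow> j = 0 \<or> j = 1 \<or> j = 2" by auto
        have TW': "T i j \<in> W'" if "i < n" "j < 3" for i j
          using wit[OF that(1)] yy[OF that(1)] YinW' that(2) unfolding T_def j3 by auto
        have TC: "T i j \<in> h i" if "i < n" "j < 3" for i j
        proof -
          have y: "yy i \<in> W'" "gcomp E W' (yy i) = h i" using yy[OF that(1)] YinW' by blast+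
          have "yy i \<in> gcomp E W' (yy i)" using y(1) by (rule comp_self)
          then have "yy i \<in> h i" using y(2) by simp
          moreover have "fst (wit i) \<in> h i" using comp_step[OF \<open>yy i \<in> h i\<close>[folded y(2)]] wit[OF that(1)] y(2) by blast
          moreover have "snd (wit i) \<in> h i" using comp_step[OF \<open>yy i \<in> h i\<close>[folded y(2)]] wit[OF that(1)] y(2) by blast
          ultimately show ?thesis using that(2) unfolding T_def j3 by auto
        qed
        have "induced_sub (join (complete 1) (copies n (path 3))) (V, E)"
        proof (rule pat_KP)
          show "d \<in> V" using d(1) WV by blast
          show "\<forall>i<n. \<forall>j<3. T i j \<in> V" using TW' W'W WV by blast
          show "\<forall>i<n. \<forall>j<3. (d, T i j) \<in> E \<and> T i j \<noteq> d" using TW' dW' unfolding W'_def by blast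
          show "\<forall>i<n. \<forall>j<3. \<forall>j'<3. (T i j, T i j') \<in> E \<longleftrightarrow> (j' = Suc j \<or> j = Suc j')"
          proof (intro allI impI)
            fix i j j' :: nat assume ij: "i < n" "j < 3" "j' < 3"
            have "(yy i, fst (wit i)) \<in> E" "(yy i, snd (wit i)) \<in> E" "(fst (wit i), snd (wit i)) \<notin> E"
              using wit[OF ij(1)] by blast+
            then have "(fst (wit i), yy i) \<in> E" "(yy i, snd (wit i)) \<in> E" "(fst (wit i), snd (wit i)) \<notin> E"
              using sE by blast+
            then show "(T i j, T i j') \<in> E \<longleftrightarrow> (j' = Suc j \<or> j = Suc j')"
              unfolding T_def using p3_table[OF _ _ _ af(3) af(4) ij(2,3)] by blast
          qed
          show "\<forall>i<n. \<forall>j<3. \<forall>j'<3. T i j = T i j' \<longrightarrow> j = j'"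
          proof (intro allI impI)
            fix i j j' :: nat assume ij: "i < n" "j < 3" "j' < 3" "T i j = T i j'"
            have w: "(yy i, fst (wit i)) \<in> E" "(yy i, snd (wit i)) \<in> E" "fst (wit i) \<noteq> snd (wit i)"
              using wit[OF ij(1)] by blast+
            then have "yy i \<noteq> fst (wit i)" "yy i \<noteq> snd (wit i)" using irr by metis+
            then show "j = j'" using ij(2,3,4) w(3) unfolding T_def j3 by auto
          qed
          show "\<forall>i<n. \<forall>i'<n. i \<noteq> i' \<longrightarrow> (\<forall>j<3. \<forall>j'<3. T i j \<noteq> T i' j' \<and> (T i j, T i' j') \<notin> E)"
          proof (intro allI impI)
            fix i i' j j' :: nat assume ii: "i < n" "i' < n" "i \<noteq> i'" "j < 3" "j' < 3"
            have y: "gcomp E W' (yy i) = h i" "gcomp E W' (yy i') = h i'" using yy ii(1,2) by blast+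
            have ne: "gcomp E W' (yy i) \<noteq> gcomp E W' (yy i')" using y hinj ii(1,2,3) by simp
            have "T i j \<in> gcomp E W' (yy i)" "T i' j' \<in> gcomp E W' (yy i')" using TC ii y by simp_all
            then show "T i j \<noteq> T i' j' \<and> (T i j, T i' j') \<notin> E" using comp_disj[OF af(3) _ _ ne] by blast
          qed
          show "sym E" "\<forall>x. (x, x) \<notin> E" using af by blast+
        qed
        with af(11) show False by (rule notE)
      qed
      have bound: "card (Bset E C) < ct" if CC: "C \<in> Cs" for C
      proof -
        obtain y where y: "y \<in> Yin" "C = gcomp E W' y" using CC unfolding Cs_def by blast
        have yW': "y \<in> W'" using y(1) YinW' by blast
        have CW': "C \<subseteq> W'" using y(2) comp_sub by simp
        have dK: "d \<notin> K" using d(1) WK by blast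
        have "amb V E n \<and> C \<subseteq> V \<and> conn E C \<and> insert d K \<subseteq> V \<and> C \<inter> insert d K = {} \<and>
          (\<forall>x\<in>insert d K. \<forall>z\<in>insert d K. x \<noteq> z \<longrightarrow> (x, z) \<in> E) \<and> (\<forall>x\<in>insert d K. \<forall>w\<in>C. (x, w) \<in> E) \<and>
          n \<le> card (insert d K) + t + 1"
        proof (intro conjI)
          show "amb V E n" by fact
          show "C \<subseteq> V" using CW' W'W WV by blast
          show "conn E C" using y(2) comp_conn[OF af(3) yW'] by simp
          show "insert d K \<subseteq> V" using d(1) WV KV by blast
          show "C \<inter> insert d K = {}" using CW' W'W WK dW' by blast
          show "\<forall>x\<in>insert d K. \<forall>z\<in>insert d K. x \<noteq> z \<longrightarrow> (x, z) \<in> E"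
          proof (intro ballI impI)
            fix x z assume xz: "x \<in> insert d K" "z \<in> insert d K" "x \<noteq> z"
            show "(x, z) \<in> E"
            proof (cases "x = d")
              case True then have "z \<in> K" using xz by blast
              then show ?thesis using KW d(1) True sE by blast
            next
              case False then have xK: "x \<in> K" using xz by blast
              show ?thesis
              proof (cases "z = d")
                case True then show ?thesis using KW d(1) xK by blast
              next
                case False then show ?thesis using Kc xK xz by blast
              qed
            qed
          qed
          show "\<forall>x\<in>insert d K. \<forall>w\<in>C. (x, w) \<in> E"
          proof (intro ballI)
            fix x w assume xw: "x \<in> insert d K" "w \<in> C"
            then have "w \<in> W'" "w \<in> W" using CW' W'W by blast+
            then show "(x, w) \<in> E" using xw(1) KW unfolding W'_def by blast
          qed
          show "n \<le> card (insert d K) + t + 1" using nK dK finK by simp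
        qed
        from IH[unfolded Mainprop_def, rule_format, OF this] show ?thesis .
      qed
      have sub: "Yin \<inter> C \<subseteq> Bset E C" if CC: "C \<in> Cs" for C
      proof
        fix y assume y: "y \<in> Yin \<inter> C"
        obtain z where z: "z \<in> Yin" "C = gcomp E W' z" using CC unfolding Cs_def by blast
        have "y \<in> Bset E W'" using y YinB by blast
        then obtain a c where ac: "y \<in> W'" "a \<in> W'" "c \<in> W'" "a \<noteq> c" "(y, a) \<in> E" "(y, c) \<in> E" "(a, c) \<notin> E"
          unfolding Bset_def by blast
        have "a \<in> C" "c \<in> C" using comp_step[of y E W' z] y z ac by blast+
        then show "y \<in> Bset E C" using y ac unfolding Bset_def by blast
      qed
      have finC: "finite C" if "C \<in> Cs" for C
      proof -
        have "C \<subseteq> W" using that comp_sub W'W unfolding Cs_def by blast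
        then show ?thesis using finW by (rule finite_subset)
      qed
      have "Yin = (\<Union>C\<in>Cs. Yin \<inter> C)"
      proof
        show "Yin \<subseteq> (\<Union>C\<in>Cs. Yin \<inter> C)"
        proof
          fix y assume y: "y \<in> Yin"
          then have "y \<in> gcomp E W' y" using comp_self YinW' by blast
          moreover have "gcomp E W' y \<in> Cs" using y unfolding Cs_def by blast
          ultimately show "y \<in> (\<Union>C\<in>Cs. Yin \<inter> C)" using y by blast
        qed
      qed blast
      then have "card Yin \<le> (\<Sum>C\<in>Cs. card (Yin \<inter> C))" using card_UN_le[OF finCs, of "\<lambda>C. Yin \<inter> C"] by simp
      also have "\<dots> \<le> (\<Sum>C\<in>Cs. ct)"
      proof (rule sum_mono)
        fix C assume C: "C \<in> Cs"
        have fB: "finite (Bset E C)" using finC[OF C] unfolding Bset_def by simp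
        have "card (Yin \<inter> C) \<le> card (Bset E C)" using card_mono[OF fB sub[OF C]] .
        then show "card (Yin \<inter> C) \<le> ct" using bound[OF C] by simp
      qed
      also have "\<dots> = card Cs * ct" by simp
      also have "\<dots> \<le> n * ct" using cCs by simp
      finally show False using cYin by simp
    qed
  qed
qed

lemma main_lem: "\<exists>c. Mainprop n t c"
proof (induction t)
  case 0 then show ?case using main_base by blast
next
  case (Suc t) then show ?case using main_step by blast
qed

definition gmap :: "('b \<Rightarrow> 'c) \<Rightarrow> 'b graph \<Rightarrow> 'c graph" where
  "gmap f G = (f ` verts G, map_prod f f ` edges G)"

lemma gmap_verts: "verts (gmap f G) = f ` verts G" by (simp add: gmap_def verts_def)
lemma gmap_edges: "edges (gmap f G) = map_prod f f ` edges G" by (simp add: gmap_def edges_def)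

lemma gmap_edge_iff:
  assumes "inj f" shows "(f u, f v) \<in> edges (gmap f G) \<longleftrightarrow> (u, v) \<in> edges G"
proof
  assume "(f u, f v) \<in> edges (gmap f G)"
  then obtain a b where "(a, b) \<in> edges G" "f u = f a" "f v = f b" unfolding gmap_edges by auto
  then show "(u, v) \<in> edges G" using assms by (simp add: inj_eq)
next
  assume "(u, v) \<in> edges G" then show "(f u, f v) \<in> edges (gmap f G)" unfolding gmap_edges by force
qed

lemma gmap_wf:
  assumes "inj f" "wf_graph G" shows "wf_graph (gmap f G)"
proof -
  have w: "finite (verts G)" "edges G \<subseteq> verts G \<times> verts G" "sym (edges G)" "irrefl (edges G)"
    using assms(2) unfolding wf_graph_def by blast+
  have "finite (verts (gmap f G))" using w(1) unfolding gmap_verts by simp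
  moreover have "edges (gmap f G) \<subseteq> verts (gmap f G) \<times> verts (gmap f G)"
    using w(2) unfolding gmap_verts gmap_edges by auto
  moreover have "sym (edges (gmap f G))"
    using w(3) unfolding gmap_edges sym_def by auto
  moreover have "irrefl (edges (gmap f G))"
    using w(4) assms(1) unfolding gmap_edges irrefl_def inj_def by auto
  ultimately show ?thesis unfolding wf_graph_def by blast
qed

lemma gmap_conn:
  assumes "connected_graph G" shows "connected_graph (gmap f G)"
proof -
  have c: "verts G \<noteq> {}" "\<forall>u\<in>verts G. \<forall>v\<in>verts G. (u, v) \<in> (edges G)\<^sup>*"
    using assms unfolding connected_graph_def by blast+
  have r: "(f u, f v) \<in> (edges (gmap f G))\<^sup>*" if "(u, v) \<in> (edges G)\<^sup>*" for u v
    using that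
  proof (induction rule: rtrancl_induct)
    case base then show ?case by simp
  next
    case (step y z)
    have "(f y, f z) \<in> edges (gmap f G)" using step.hyps(2) unfolding gmap_edges by force
    then show ?case using step.IH by (rule rtrancl_into_rtrancl[rotated])
  qed
  show ?thesis unfolding connected_graph_def gmap_verts using c r by blast
qed

lemma gmap_sub:
  assumes "inj f" shows "induced_sub (gmap f G) G"
  unfolding induced_sub_def
proof (intro exI[of _ "inv f"] conjI)
  show "inj_on (inv f) (verts (gmap f G))" unfolding gmap_verts inj_on_def using assms by simp
  show "inv f ` verts (gmap f G) \<subseteq> verts G" unfolding gmap_verts using assms by auto
  show "\<forall>u\<in>verts (gmap f G). \<forall>v\<in>verts (gmap f G). (u, v) \<in> edges (gmap f G) \<longleftrightarrow> (inv f u, inv f v) \<in> edges G"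
    unfolding gmap_verts using gmap_edge_iff[OF assms] assms by auto
qed

definition Bv :: "'b graph \<Rightarrow> 'b \<Rightarrow> bool" where
  "Bv G v \<longleftrightarrow> (\<exists>a\<in>verts G. \<exists>c\<in>verts G. a \<noteq> c \<and> (v, a) \<in> edges G \<and> (v, c) \<in> edges G \<and> (a, c) \<notin> edges G)"

lemma transfer:
  fixes F :: "'b::countable graph" and \<H> :: "'a graph set"
  assumes "wf_graph F" "connected_graph F" "\<forall>H\<in>\<H>. \<not> induced_sub H F"
    "S \<subseteq> verts F" "c \<le> card S" "\<forall>v\<in>S. Bv F v"
  shows "\<exists>G::nat graph. wf_graph G \<and> connected_graph G \<and> H_free \<H> G \<and>
     c \<le> card {v \<in> verts G. alpha (induced G (nbhd G v)) \<ge> 2}"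
proof (intro exI[of _ "gmap to_nat F"] conjI)
  let ?G = "gmap to_nat F"
  have inj: "inj (to_nat :: 'b \<Rightarrow> nat)" by (rule inj_to_nat)
  show wf: "wf_graph ?G" using gmap_wf[OF inj assms(1)] .
  show "connected_graph ?G" using gmap_conn[OF assms(2)] .
  show "H_free \<H> ?G" unfolding H_free_def
    using assms(3) induced_sub_trans[OF _ gmap_sub[OF inj]] by blast
  have finS: "finite S" using assms(1,4) unfolding wf_graph_def by (meson finite_subset)
  have "to_nat ` S \<subseteq> {v \<in> verts ?G. alpha (induced ?G (nbhd ?G v)) \<ge> 2}"
  proof
    fix x assume "x \<in> to_nat ` S"
    then obtain v where v: "v \<in> S" "x = to_nat v" by blast
    then obtain a b where ab: "a \<in> verts F" "b \<in> verts F" "a \<noteq> b" "(v, a) \<in> edges F" "(v, b) \<in> edges F" "(a, b) \<notin> edges F"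
      using assms(6) unfolding Bv_def by blast
    have "to_nat a \<in> verts ?G" "to_nat b \<in> verts ?G" "to_nat a \<noteq> to_nat b"
      "(to_nat v, to_nat a) \<in> edges ?G" "(to_nat v, to_nat b) \<in> edges ?G" "(to_nat a, to_nat b) \<notin> edges ?G"
      using ab inj gmap_edge_iff[OF inj] unfolding gmap_verts by (auto simp: inj_eq)
    then have "alpha (induced ?G (nbhd ?G x)) \<ge> 2" unfolding v(2) using alpha_ge2_iff[OF wf] by blast
    moreover have "x \<in> verts ?G" using v assms(4) unfolding gmap_verts by blast
    ultimately show "x \<in> {v \<in> verts ?G. alpha (induced ?G (nbhd ?G v)) \<ge> 2}" by blast
  qed
  moreover have "finite {v \<in> verts ?G. alpha (induced ?G (nbhd ?G v)) \<ge> 2}"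
    using wf unfolding wf_graph_def by simp
  ultimately have "card (to_nat ` S) \<le> card {v \<in> verts ?G. alpha (induced ?G (nbhd ?G v)) \<ge> 2}"
    by (rule card_mono[rotated])
  moreover have "card (to_nat ` S) = card S" using card_image[OF inj_on_subset[OF inj]] by blast
  ultimately show "c \<le> card {v \<in> verts ?G. alpha (induced ?G (nbhd ?G v)) \<ge> 2}" using assms(5) by simp
qed

lemma hub_connected:
  assumes "sym (edges G)" "h \<in> verts G" "\<forall>u\<in>verts G. (h, u) \<in> (edges G)\<^sup>*"
  shows "connected_graph G"
  unfolding connected_graph_def
proof (intro conjI ballI)
  show "verts G \<noteq> {}" using assms(2) by blast
  fix u v assume "u \<in> verts G" "v \<in> verts G"
  then have "(h, u) \<in> (edges G)\<^sup>*" "(h, v) \<in> (edges G)\<^sup>*" using assms(3) by blast+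
  moreover have "sym ((edges G)\<^sup>*)" using sym_rtrancl[OF assms(1)] .
  ultimately have "(u, h) \<in> (edges G)\<^sup>*" "(h, v) \<in> (edges G)\<^sup>*" unfolding sym_def by blast+
  then show "(u, v) \<in> (edges G)\<^sup>*" by (rule rtrancl_trans)
qed

lemma wf_cs: "wf_graph (complete_star m)"
  unfolding wf_graph_def sym_def irrefl_def complete_star_def add_pendants_def complete_def verts_def edges_def
  by auto
lemma wf_path: "wf_graph (path m)"
  unfolding wf_graph_def sym_def irrefl_def path_def verts_def edges_def by auto
lemma wf_ss: "wf_graph (star_subdiv m)"
  unfolding wf_graph_def sym_def irrefl_def star_subdiv_def add_pendants_def complete_bip_def verts_def edges_def
  by auto
lemma wf_kb: "wf_graph (complete_bip 2 m)"
  unfolding wf_graph_def sym_def irrefl_def complete_bip_def verts_def edges_def by auto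
lemma wf_ek: "wf_graph (join (edgeless 2) (complete m))"
  unfolding wf_graph_def sym_def irrefl_def join_def edgeless_def complete_def verts_def edges_def by auto
lemma wf_kp: "wf_graph (join (complete 1) (copies m (path 3)))"
  unfolding wf_graph_def sym_def irrefl_def join_def complete_def copies_def path_def verts_def edges_def by auto
lemma wf_ck: "wf_graph (CK m)"
proof -
  have "{(b::bool, i). i < m} = UNIV \<times> {..<m}" by auto
  then have "finite {(b::bool, i). i < m}" by simp
  then show ?thesis
    unfolding wf_graph_def sym_def irrefl_def CK_def verts_def edges_def by auto
qed

lemma wf_sym: "wf_graph G \<Longrightarrow> sym (edges G)" unfolding wf_graph_def by blast

lemma edge_rt: "(x, y) \<in> E \<Longrightarrow> (x, y) \<in> E\<^sup>*" by blast
lemma edge_rt2: "(x, y) \<in> E \<Longrightarrow> (y, z) \<in> E \<Longrightarrow> (x, z) \<in> E\<^sup>*" by (meson rtrancl.simps)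

lemma conn_cs: assumes "2 \<le> m" shows "connected_graph (complete_star m)"
proof (rule hub_connected[OF wf_sym[OF wf_cs], of "Inl 0"])
  show "Inl 0 \<in> verts (complete_star m)" using assms unfolding cs_verts by auto
  show "\<forall>u\<in>verts (complete_star m). (Inl 0, u) \<in> (edges (complete_star m))\<^sup>*"
  proof
    fix u assume "u \<in> verts (complete_star m)"
    then obtain j where j: "j < m" "u = Inl j \<or> u = Inr j" unfolding cs_verts by auto
    have a: "(Inl 0, Inl j) \<in> (edges (complete_star m))\<^sup>*"
      using j assms by (cases "j = 0") (auto intro: edge_rt simp: cs_edges)
    have "(Inl j, Inr j) \<in> edges (complete_star m)" using j by (simp add: cs_edges)
    then have "(Inl 0, Inr j) \<in> (edges (complete_star m))\<^sup>*" using a by (rule rtrancl_into_rtrancl[rotated])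
    then show "(Inl 0, u) \<in> (edges (complete_star m))\<^sup>*" using a j by blast
  qed
qed

lemma B_cs: assumes "2 \<le> m" shows "\<exists>S\<subseteq>verts (complete_star m). m - 2 \<le> card S \<and> (\<forall>v\<in>S. Bv (complete_star m) v)"
proof (intro exI[of _ "Inl ` {0..<m}"] conjI ballI)
  show "Inl ` {0..<m} \<subseteq> verts (complete_star m)" unfolding cs_verts by blast
  show "m - 2 \<le> card (Inl ` {0..<m} :: (nat + nat) set)" by (simp add: card_image)
  fix v assume "v \<in> (Inl ` {0..<m} :: (nat + nat) set)"
  then obtain i where i: "i < m" "v = Inl i" by auto
  define j where "j = (if i = 0 then 1 else 0::nat)"
  have j: "j < m" "j \<noteq> i" using assms i unfolding j_def by auto
  show "Bv (complete_star m) v" unfolding Bv_def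
    by (rule bexI[of _ "Inr i"], rule bexI[of _ "Inl j"]) (use i j in \<open>auto simp: cs_edges cs_verts\<close>)
qed

lemma conn_path: assumes "2 \<le> m" shows "connected_graph (path m)"
proof (rule hub_connected[OF wf_sym[OF wf_path], of 0])
  show "0 \<in> verts (path m)" using assms unfolding path_verts by auto
  have "i < m \<longrightarrow> (0, i) \<in> (edges (path m))\<^sup>*" for i
  proof (induction i)
    case 0 then show ?case by simp
  next
    case (Suc i)
    show ?case
    proof
      assume "Suc i < m"
      then have "(0, i) \<in> (edges (path m))\<^sup>*" "(i, Suc i) \<in> edges (path m)" using Suc by (auto simp: path_edges)
      then show "(0, Suc i) \<in> (edges (path m))\<^sup>*" by (rule rtrancl_into_rtrancl)
    qed
  qed
  then show "\<forall>u\<in>verts (path m). (0, u) \<in> (edges (path m))\<^sup>*" unfolding path_verts by auto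
qed

lemma B_path: assumes "2 \<le> m" shows "\<exists>S\<subseteq>verts (path m). m - 2 \<le> card S \<and> (\<forall>v\<in>S. Bv (path m) v)"
proof (intro exI[of _ "{1..<m-1}"] conjI ballI)
  show "{1..<m-1} \<subseteq> verts (path m)" unfolding path_verts by auto
  show "m - 2 \<le> card {1..<m-1}" by simp
  fix v assume v: "v \<in> {1..<m-1}"
  show "Bv (path m) v" unfolding Bv_def
    by (rule bexI[of _ "v - 1"], rule bexI[of _ "v + 1"]) (use v in \<open>auto simp: path_edges path_verts\<close>)
qed

lemma conn_ss: assumes "2 \<le> m" shows "connected_graph (star_subdiv m)"
proof (rule hub_connected[OF wf_sym[OF wf_ss], of "Inl (Inl 0)"])
  show "Inl (Inl 0) \<in> verts (star_subdiv m)" unfolding ss_verts by auto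
  show "\<forall>u\<in>verts (star_subdiv m). (Inl (Inl 0), u) \<in> (edges (star_subdiv m))\<^sup>*"
  proof
    fix u assume "u \<in> verts (star_subdiv m)"
    then consider "u = Inl (Inl 0)" | j where "j < m" "u = Inl (Inr j)" | j where "j < m" "u = Inr (Inr j)"
      unfolding ss_verts by auto
    then show "(Inl (Inl 0), u) \<in> (edges (star_subdiv m))\<^sup>*"
    proof cases
      case 1 then show ?thesis by simp
    next
      case 2 then show ?thesis by (auto intro: edge_rt simp: ss_edges)
    next
      case 3 then show ?thesis by (auto intro!: edge_rt2[of _ "Inl (Inr j)"] simp: ss_edges)
    qed
  qed
qed

lemma B_ss: assumes "2 \<le> m" shows "\<exists>S\<subseteq>verts (star_subdiv m). m - 2 \<le> card S \<and> (\<forall>v\<in>S. Bv (star_subdiv m) v)"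
proof (intro exI[of _ "Inl ` Inr ` {0..<m}"] conjI ballI)
  show "Inl ` Inr ` {0..<m} \<subseteq> verts (star_subdiv m)" unfolding ss_verts by blast
  show "m - 2 \<le> card (Inl ` Inr ` {0..<m} :: ((nat + nat) + (nat + nat)) set)" by (simp add: card_image)
  fix v assume "v \<in> (Inl ` Inr ` {0..<m} :: ((nat + nat) + (nat + nat)) set)"
  then obtain i where i: "i < m" "v = Inl (Inr i)" by auto
  show "Bv (star_subdiv m) v" unfolding Bv_def
    by (rule bexI[of _ "Inl (Inl 0)"], rule bexI[of _ "Inr (Inr i)"]) (use i in \<open>auto simp: ss_edges ss_verts\<close>)
qed

lemma conn_kb: assumes "2 \<le> m" shows "connected_graph (complete_bip 2 m)"
proof (rule hub_connected[OF wf_sym[OF wf_kb], of "Inr 0"])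
  show "Inr 0 \<in> verts (complete_bip 2 m)" using assms unfolding kb_verts by auto
  show "\<forall>u\<in>verts (complete_bip 2 m). (Inr 0, u) \<in> (edges (complete_bip 2 m))\<^sup>*"
  proof
    fix u assume "u \<in> verts (complete_bip 2 m)"
    then consider i where "i < 2" "u = Inl i" | j where "j < m" "u = Inr j" unfolding kb_verts by auto
    then show "(Inr 0, u) \<in> (edges (complete_bip 2 m))\<^sup>*"
    proof cases
      case 1 then show ?thesis using assms by (auto intro: edge_rt simp: kb_edges)
    next
      case 2 then show ?thesis using assms by (auto intro!: edge_rt2[of _ "Inl 0"] simp: kb_edges)
    qed
  qed
qed

lemma B_kb: assumes "2 \<le> m" shows "\<exists>S\<subseteq>verts (complete_bip 2 m). m - 2 \<le> card S \<and> (\<forall>v\<in>S. Bv (complete_bip 2 m) v)"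
proof (intro exI[of _ "Inr ` {0..<m}"] conjI ballI)
  show "Inr ` {0..<m} \<subseteq> verts (complete_bip 2 m)" unfolding kb_verts by blast
  show "m - 2 \<le> card (Inr ` {0..<m} :: (nat + nat) set)" by (simp add: card_image)
  fix v assume "v \<in> (Inr ` {0..<m} :: (nat + nat) set)"
  then obtain i where i: "i < m" "v = Inr i" by auto
  show "Bv (complete_bip 2 m) v" unfolding Bv_def
    by (rule bexI[of _ "Inl 0"], rule bexI[of _ "Inl 1"]) (use i in \<open>auto simp: kb_edges kb_verts\<close>)
qed

lemma conn_ek: assumes "2 \<le> m" shows "connected_graph (join (edgeless 2) (complete m))"
proof (rule hub_connected[OF wf_sym[OF wf_ek], of "Inr 0"])
  show "Inr 0 \<in> verts (join (edgeless 2) (complete m))" using assms unfolding ek_verts by auto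
  show "\<forall>u\<in>verts (join (edgeless 2) (complete m)). (Inr 0, u) \<in> (edges (join (edgeless 2) (complete m)))\<^sup>*"
  proof
    fix u assume "u \<in> verts (join (edgeless 2) (complete m))"
    then consider i where "i < 2" "u = Inl i" | j where "j < m" "u = Inr j" unfolding ek_verts by auto
    then show "(Inr 0, u) \<in> (edges (join (edgeless 2) (complete m)))\<^sup>*"
    proof cases
      case 1 then show ?thesis using assms by (auto intro: edge_rt simp: ek_edges)
    next
      case 2 then show ?thesis using assms by (cases "j = 0") (auto intro: edge_rt simp: ek_edges)
    qed
  qed
qed

lemma B_ek: assumes "2 \<le> m" shows "\<exists>S\<subseteq>verts (join (edgeless 2) (complete m)). m - 2 \<le> card S \<and> (\<forall>v\<in>S. Bv (join (edgeless 2) (complete m)) v)"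
proof (intro exI[of _ "Inr ` {0..<m}"] conjI ballI)
  show "Inr ` {0..<m} \<subseteq> verts (join (edgeless 2) (complete m))" unfolding ek_verts by blast
  show "m - 2 \<le> card (Inr ` {0..<m} :: (nat + nat) set)" by (simp add: card_image)
  fix v assume "v \<in> (Inr ` {0..<m} :: (nat + nat) set)"
  then obtain i where i: "i < m" "v = Inr i" by auto
  show "Bv (join (edgeless 2) (complete m)) v" unfolding Bv_def
    by (rule bexI[of _ "Inl 0"], rule bexI[of _ "Inl 1"]) (use i in \<open>auto simp: ek_edges ek_verts\<close>)
qed

lemma conn_kp: assumes "2 \<le> m" shows "connected_graph (join (complete 1) (copies m (path 3)))"
proof (rule hub_connected[OF wf_sym[OF wf_kp], of "Inl 0"])
  show "Inl 0 \<in> verts (join (complete 1) (copies m (path 3)))" unfolding kp_verts by auto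
  show "\<forall>u\<in>verts (join (complete 1) (copies m (path 3))). (Inl 0, u) \<in> (edges (join (complete 1) (copies m (path 3))))\<^sup>*"
  proof
    fix u assume "u \<in> verts (join (complete 1) (copies m (path 3)))"
    then consider "u = Inl 0" | i j where "i < m" "j < 3" "u = Inr (i, j)" unfolding kp_verts by auto
    then show "(Inl 0, u) \<in> (edges (join (complete 1) (copies m (path 3))))\<^sup>*"
    proof cases
      case 1 then show ?thesis by simp
    next
      case 2
      then have "(Inl 0, u) \<in> edges (join (complete 1) (copies m (path 3)))" using kp_edges(2) by simp
      then show ?thesis by blast
    qed
  qed
qed

lemma B_kp: assumes "2 \<le> m" shows "\<exists>S\<subseteq>verts (join (complete 1) (copies m (path 3))). m - 2 \<le> card S \<and> (\<forall>v\<in>S. Bv (join (complete 1) (copies m (path 3))) v)"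
proof (intro exI[of _ "(\<lambda>i. Inr (i, 1)) ` {0..<m}"] conjI ballI)
  show "(\<lambda>i. Inr (i, 1)) ` {0..<m} \<subseteq> verts (join (complete 1) (copies m (path 3)))" unfolding kp_verts by auto
  have "inj_on (\<lambda>i. Inr (i, 1) :: nat + nat \<times> nat) {0..<m}" unfolding inj_on_def by simp
  then show "m - 2 \<le> card ((\<lambda>i. Inr (i, 1)) ` {0..<m} :: (nat + nat \<times> nat) set)" by (simp add: card_image)
  fix v assume "v \<in> ((\<lambda>i. Inr (i, 1)) ` {0..<m} :: (nat + nat \<times> nat) set)"
  then obtain i where i: "i < m" "v = Inr (i, 1)" by auto
  show "Bv (join (complete 1) (copies m (path 3))) v" unfolding Bv_def
    by (rule bexI[of _ "Inr (i, 0)"], rule bexI[of _ "Inr (i, 2)"]) (use i kp_edges(4)[unfolded One_nat_def] in \<open>auto simp: kp_verts[unfolded One_nat_def]\<close>)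
qed

lemma conn_ck: assumes "2 \<le> m" shows "connected_graph (CK m)"
proof (rule hub_connected[OF wf_sym[OF wf_ck], of "(True, 0)"])
  show "(True, 0) \<in> verts (CK m)" using assms unfolding ck_verts by auto
  show "\<forall>u\<in>verts (CK m). ((True, 0), u) \<in> (edges (CK m))\<^sup>*"
  proof
    fix u assume "u \<in> verts (CK m)"
    then obtain b j where bj: "j < m" "u = (b, j)" unfolding ck_verts by auto
    have a: "((True, 0), (True, j)) \<in> (edges (CK m))\<^sup>*"
      using bj assms by (cases "j = 0") (auto intro: edge_rt simp: ck_edges)
    have "((True, j), (False, j)) \<in> edges (CK m)" using bj by (simp add: ck_edges)
    then have "((True, 0), (False, j)) \<in> (edges (CK m))\<^sup>*" using a by (rule rtrancl_into_rtrancl[rotated])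
    then show "((True, 0), u) \<in> (edges (CK m))\<^sup>*" using a bj by (cases b) auto
  qed
qed

lemma B_ck: assumes "2 \<le> m" shows "\<exists>S\<subseteq>verts (CK m). m - 2 \<le> card S \<and> (\<forall>v\<in>S. Bv (CK m) v)"
proof (intro exI[of _ "(\<lambda>i. (True, i)) ` {0..<m}"] conjI ballI)
  show "(\<lambda>i. (True, i)) ` {0..<m} \<subseteq> verts (CK m)" unfolding ck_verts by auto
  have "inj_on (\<lambda>i. (True, i)) {0..<m}" unfolding inj_on_def by simp
  then show "m - 2 \<le> card ((\<lambda>i. (True, i)) ` {0..<m})" by (simp add: card_image)
  fix v assume "v \<in> (\<lambda>i. (True, i)) ` {0..<m}"
  then obtain i where i: "i < m" "v = (True, i)" by auto
  define j where "j = (if i = 0 then 1 else 0::nat)"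
  have j: "j < m" "j \<noteq> i" using assms i unfolding j_def by auto
  show "Bv (CK m) v" unfolding Bv_def
    by (rule bexI[of _ "(False, i)"], rule bexI[of _ "(True, j)"]) (use i j in \<open>auto simp: ck_edges ck_verts\<close>)
qed

lemma contra_F:
  fixes F :: "'b::countable graph" and \<H> :: "'a graph set"
  assumes "wf_graph F" "connected_graph F" "\<forall>H\<in>\<H>. \<not> induced_sub H F"
    "\<exists>S\<subseteq>verts F. c \<le> card S \<and> (\<forall>v\<in>S. Bv F v)"
    "\<forall>G :: nat graph. wf_graph G \<and> connected_graph G \<and> H_free \<H> G \<longrightarrow>
            card {v \<in> verts G. alpha (induced G (nbhd G v)) \<ge> 2} < c"
  shows False
proof -
  obtain S where S: "S \<subseteq> verts F" "c \<le> card S" "\<forall>v\<in>S. Bv F v" using assms(4) by blast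
  obtain G :: "nat graph" where G: "wf_graph G" "connected_graph G" "H_free \<H> G"
    "c \<le> card {v \<in> verts G. alpha (induced G (nbhd G v)) \<ge> 2}"
    using transfer[OF assms(1,2,3) S] by blast
  have "card {v \<in> verts G. alpha (induced G (nbhd G v)) \<ge> 2} < c" using assms(5) G(1,2,3) by blast
  then show False using G(4) by simp
qed

lemma not_below:
  assumes "\<not> below_family \<H> m"
  shows "(\<forall>H\<in>\<H>. \<not> induced_sub H (complete_star m)) \<or> (\<forall>H\<in>\<H>. \<not> induced_sub H (path m)) \<or>
    (\<forall>H\<in>\<H>. \<not> induced_sub H (star_subdiv m)) \<or> (\<forall>H\<in>\<H>. \<not> induced_sub H (complete_bip 2 m)) \<or>
    (\<forall>H\<in>\<H>. \<not> induced_sub H (join (edgeless 2) (complete m))) \<or>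
    (\<forall>H\<in>\<H>. \<not> induced_sub H (join (complete 1) (copies m (path 3)))) \<or> (\<forall>H\<in>\<H>. \<not> induced_sub H (CK m))"
  using assms unfolding below_family_def by blast

lemma dir1:
  fixes \<H> :: "'a graph set"
  assumes c: "\<forall>G :: nat graph. wf_graph G \<and> connected_graph G \<and> H_free \<H> G \<longrightarrow>
            card {v \<in> verts G. alpha (induced G (nbhd G v)) \<ge> 2} < c"
  shows "\<exists>n::nat. n > 0 \<and> below_family \<H> n"
proof (rule ccontr)
  assume "\<not> (\<exists>n::nat. n > 0 \<and> below_family \<H> n)"
  moreover have "(c + 2::nat) > 0" by simp
  ultimately have "\<not> below_family \<H> (c + 2)" by blast
  note nb = not_below[OF this]
  have m2: "2 \<le> c + 2" by simp
  have cm: "c = c + 2 - 2" by simp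
  from nb show False
  proof (elim disjE)
    assume "\<forall>H\<in>\<H>. \<not> induced_sub H (complete_star (c + 2))"
    then show False by (rule contra_F[OF wf_cs conn_cs[OF m2] _ _ c]) (use B_cs[OF m2] in simp)
  next
    assume "\<forall>H\<in>\<H>. \<not> induced_sub H (path (c + 2))"
    then show False by (rule contra_F[OF wf_path conn_path[OF m2] _ _ c]) (use B_path[OF m2] in simp)
  next
    assume "\<forall>H\<in>\<H>. \<not> induced_sub H (star_subdiv (c + 2))"
    then show False by (rule contra_F[OF wf_ss conn_ss[OF m2] _ _ c]) (use B_ss[OF m2] in simp)
  next
    assume "\<forall>H\<in>\<H>. \<not> induced_sub H (complete_bip 2 (c + 2))"
    then show False by (rule contra_F[OF wf_kb conn_kb[OF m2] _ _ c]) (use B_kb[OF m2] in simp)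
  next
    assume "\<forall>H\<in>\<H>. \<not> induced_sub H (join (edgeless 2) (complete (c + 2)))"
    then show False by (rule contra_F[OF wf_ek conn_ek[OF m2] _ _ c]) (use B_ek[OF m2] in simp)
  next
    assume "\<forall>H\<in>\<H>. \<not> induced_sub H (join (complete 1) (copies (c + 2) (path 3)))"
    then show False by (rule contra_F[OF wf_kp conn_kp[OF m2] _ _ c]) (use B_kp[OF m2] in simp)
  next
    assume "\<forall>H\<in>\<H>. \<not> induced_sub H (CK (c + 2))"
    then show False by (rule contra_F[OF wf_ck conn_ck[OF m2] _ _ c]) (use B_ck[OF m2] in simp)
  qed
qed

lemma graph_eq: "G = (verts G, edges G)" by (simp add: verts_def edges_def)

lemma dir2:
  fixes \<H> :: "'a graph set"
  assumes "n > 0" "below_family \<H> n"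
  shows "\<exists>c::nat. \<forall>G :: nat graph. wf_graph G \<and> connected_graph G \<and> H_free \<H> G \<longrightarrow>
            card {v \<in> verts G. alpha (induced G (nbhd G v)) \<ge> 2} < c"
proof -
  obtain c where c: "Mainprop n n c" using main_lem by blast
  show ?thesis
  proof (intro exI[of _ c] allI impI)
    fix G :: "nat graph"
    assume A: "wf_graph G \<and> connected_graph G \<and> H_free \<H> G"
    let ?V = "verts G" and ?E = "edges G"
    have wf: "wf_graph G" and cg: "connected_graph G" and hf: "H_free \<H> G" using A by blast+
    have w: "finite ?V" "?E \<subseteq> ?V \<times> ?V" "sym ?E" "irrefl ?E" using wf unfolding wf_graph_def by blast+
    have free: "\<not> induced_sub F (?V, ?E)" if HF: "\<exists>H\<in>\<H>. induced_sub H F" for F :: "'b graph"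
    proof
      assume "induced_sub F (?V, ?E)"
      then have FG: "induced_sub F G" using graph_eq[of G] by simp
      obtain H where "H \<in> \<H>" "induced_sub H F" using HF by blast
      then have "H \<in> \<H>" "induced_sub H G" using induced_sub_trans[OF _ FG] by blast+
      then show False using hf unfolding H_free_def by blast
    qed
    have bf: "\<exists>H\<in>\<H>. induced_sub H (complete_star n)" "\<exists>H\<in>\<H>. induced_sub H (path n)"
      "\<exists>H\<in>\<H>. induced_sub H (star_subdiv n)" "\<exists>H\<in>\<H>. induced_sub H (complete_bip 2 n)"
      "\<exists>H\<in>\<H>. induced_sub H (join (edgeless 2) (complete n))"
      "\<exists>H\<in>\<H>. induced_sub H (join (complete 1) (copies n (path 3)))" "\<exists>H\<in>\<H>. induced_sub H (CK n)"
      using assms(2) unfolding below_family_def by blast+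
    have amb: "amb ?V ?E n"
      unfolding amb_def using w assms(1) free[OF bf(1)] free[OF bf(2)] free[OF bf(3)] free[OF bf(4)]
        free[OF bf(5)] free[OF bf(6)] free[OF bf(7)] unfolding irrefl_def by blast
    have EV: "?E \<inter> ?V \<times> ?V = ?E" using w(2) by blast
    have conn: "conn ?E ?V" unfolding conn_def EV using cg unfolding connected_graph_def by blast
    have "amb ?V ?E n \<and> ?V \<subseteq> ?V \<and> conn ?E ?V \<and> {} \<subseteq> ?V \<and> ?V \<inter> {} = {} \<and>
      (\<forall>x\<in>{}. \<forall>y\<in>{}. x \<noteq> y \<longrightarrow> (x, y) \<in> ?E) \<and> (\<forall>x\<in>{}. \<forall>w\<in>?V. (x, w) \<in> ?E) \<and> n \<le> card {} + n + 1"
      using amb conn by simp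
    from c[unfolded Mainprop_def, rule_format, OF this] have "card (Bset ?E ?V) < c" .
    moreover have "{v \<in> verts G. alpha (induced G (nbhd G v)) \<ge> 2} = Bset ?E ?V"
      unfolding Bset_def using alpha_ge2_iff[OF wf] by blast
    ultimately show "card {v \<in> verts G. alpha (induced G (nbhd G v)) \<ge> 2} < c" by simp
  qed
qed

theorem theorem1p5:
  fixes \<H> :: "'a graph set"
  assumes "\<forall>H\<in>\<H>. wf_graph H"
  shows "(\<exists>c::nat. \<forall>G :: nat graph. wf_graph G \<and> connected_graph G \<and> H_free \<H> G \<longrightarrow>
            card {v \<in> verts G. alpha (induced G (nbhd G v)) \<ge> 2} < c)
         \<longleftrightarrow> (\<exists>n::nat. n > 0 \<and> below_family \<H> n)"
proof
  assume "\<exists>c::nat. \<forall>G :: nat graph. wf_graph G \<and> connected_graph G \<and> H_free \<H> G \<longrightarrow>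
            card {v \<in> verts G. alpha (induced G (nbhd G v)) \<ge> 2} < c"
  then obtain c where "\<forall>G :: nat graph. wf_graph G \<and> connected_graph G \<and> H_free \<H> G \<longrightarrow>
            card {v \<in> verts G. alpha (induced G (nbhd G v)) \<ge> 2} < c" by blast
  then show "\<exists>n::nat. n > 0 \<and> below_family \<H> n" by (rule dir1)
next
  assume "\<exists>n::nat. n > 0 \<and> below_family \<H> n"
  then obtain n where "n > 0" "below_family \<H> n" by blast
  then show "\<exists>c::nat. \<forall>G :: nat graph. wf_graph G \<and> connected_graph G \<and> H_free \<H> G \<longrightarrow>
            card {v \<in> verts G. alpha (induced G (nbhd G v)) \<ge> 2} < c" by (rule dir2)
qed

end
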